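(* For all integers $n>m\geq 1$, the group $\mathrm{Diff}^\omega_+(\mathbb{R})$ of orientation-preserving real-analytic diffeomorphisms of $\mathbb{R}$ contains a subgroup isomorphic to the Baumslag–Solitar group $\mathrm{BS}(m,n)=\langle a,b : ab^ma^{-1}=b^n\rangle$. The same holds for the groups $\mathrm{Homeo}_+(S^1)$ and $\mathrm{Homeo}_+([0,1])$ of orientation-preserving homeomorphisms of the circle and of the interval. *)

theory Defs
  imports "HOL-Analysis.Analysis" "HOL-Algebra.Group"
begin

datatype bs_gen = GenA | GenB

text \<open>A letter is a generator with a sign (True = the generator, False = its inverse).\<close>
type_synonym bs_letter = "bool \<times> bs_gen"

definition bs_inv_letter :: "bs_letter \<Rightarrow> bs_letter" where
  "bs_inv_letter x = (\<not> fst x, snd x)"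

definition bs_relator :: "nat \<Rightarrow> nat \<Rightarrow> bs_letter list" where
  "bs_relator m n =
     [(True, GenA)] @ replicate m (True, GenB) @ [(False, GenA)] @ replicate n (False, GenB)"

inductive bs_equiv :: "nat \<Rightarrow> nat \<Rightarrow> bs_letter list \<Rightarrow> bs_letter list \<Rightarrow> bool"
  for m n :: nat where
  refl: "bs_equiv m n w w"
| sym: "bs_equiv m n u v \<Longrightarrow> bs_equiv m n v u"
| trans: "bs_equiv m n u v \<Longrightarrow> bs_equiv m n v w \<Longrightarrow> bs_equiv m n u w"
| cancel: "bs_equiv m n (u @ v) (u @ [x, bs_inv_letter x] @ v)"
| relator: "bs_equiv m n (u @ v) (u @ bs_relator m n @ v)"

definition bs_rel :: "nat \<Rightarrow> nat \<Rightarrow> (bs_letter list \<times> bs_letter list) set" where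
  "bs_rel m n = {(u, v). bs_equiv m n u v}"

definition BS :: "nat \<Rightarrow> nat \<Rightarrow> bs_letter list set monoid" where
  "BS m n = \<lparr> carrier = UNIV // bs_rel m n,
              mult = (\<lambda>X Y. (\<Union>x\<in>X. \<Union>y\<in>Y. bs_rel m n `` {x @ y})),
              one = bs_rel m n `` {[]} \<rparr>"

definition real_analytic_at :: "(real \<Rightarrow> real) \<Rightarrow> real \<Rightarrow> bool" where
  "real_analytic_at f x \<longleftrightarrow>
     (\<exists>r>0. \<exists>c :: nat \<Rightarrow> real. \<forall>y. \<bar>y - x\<bar> < r \<longrightarrow> (\<lambda>k. c k * (y - x) ^ k) sums f y)"

definition real_analytic :: "(real \<Rightarrow> real) \<Rightarrow> bool" where
  "real_analytic f \<longleftrightarrow> (\<forall>x. real_analytic_at f x)"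

definition Diff_omega_plus_R :: "(real \<Rightarrow> real) monoid" where
  "Diff_omega_plus_R = \<lparr> carrier = {f. bij f \<and> strict_mono f \<and> real_analytic f \<and> real_analytic (Hilbert_Choice.inv f)},
                         mult = (\<lambda>f g. f \<circ> g),
                         one = id \<rparr>"

definition Homeo_plus_I :: "(real \<Rightarrow> real) monoid" where
  "Homeo_plus_I = \<lparr> carrier = {f. (\<exists>g. homeomorphism {0..1} {0..1} f g)
                                 \<and> strict_mono_on {0..1} f
                                 \<and> (\<forall>x. x \<notin> {0..1} \<longrightarrow> f x = x)},
                    mult = (\<lambda>f g. f \<circ> g),
                    one = id \<rparr>"

definition circle :: "complex set" where
  "circle = {z. norm z = 1}"

text \<open>A homeomorphism of S^1 is orientation preserving iff it lifts, via
  t \<mapsto> exp(2 pi i t), to an increasing homeomorphism F of R with F(t+1) = F(t)+1.\<close>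
definition Homeo_plus_S1 :: "(complex \<Rightarrow> complex) monoid" where
  "Homeo_plus_S1 = \<lparr> carrier = {f. (\<exists>g. homeomorphism circle circle f g)
                       \<and> (\<exists>F :: real \<Rightarrow> real. continuous_on UNIV F \<and> strict_mono F
                            \<and> (\<forall>t. F (t + 1) = F t + 1)
                            \<and> (\<forall>t. f (cis (2 * pi * t)) = cis (2 * pi * F t)))
                       \<and> (\<forall>z. z \<notin> circle \<longrightarrow> f z = z)},
                     mult = (\<lambda>f g. f \<circ> g),
                     one = id \<rparr>"

definition contains_copy_of :: "('a, 'c) monoid_scheme \<Rightarrow> ('b, 'd) monoid_scheme \<Rightarrow> bool" where
  "contains_copy_of G H \<longleftrightarrow> (\<exists>K. subgroup K G \<and> H \<cong> G\<lparr>carrier := K\<rparr>)"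

end

theory Submission
  imports Defs "HOL-Complex_Analysis.Complex_Analysis"
begin

definition "lA = (True, GenA)"
definition "lA' = (False, GenA)"
definition "lB = (True, GenB)"
definition "lB' = (False, GenB)"

lemma bs_cong: "bs_equiv m n u v \<Longrightarrow> bs_equiv m n (p @ u @ q) (p @ v @ q)"
proof (induction rule: bs_equiv.induct)
  case (refl w) then show ?case by (rule bs_equiv.refl)
next
  case (sym u v) show ?case using sym.IH by (rule bs_equiv.sym)
next
  case (trans u v w) show ?case using trans.IH by (blast intro: bs_equiv.trans)
next
  case (cancel u v x) then show ?case using bs_equiv.cancel[of m n "p@u" "v@q" x] by simp
next
  case (relator u v) then show ?case using bs_equiv.relator[of m n "p@u" "v@q"] by simp
qed

lemma bs_app: "bs_equiv m n u u' \<Longrightarrow> bs_equiv m n v v' \<Longrightarrow> bs_equiv m n (u @ v) (u' @ v')"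
  by (metis append_Nil append_Nil2 bs_cong bs_equiv.trans)

definition inv_word :: "bs_letter list \<Rightarrow> bs_letter list" where
  "inv_word w = rev (map bs_inv_letter w)"

lemma inv_letter_inv[simp]: "bs_inv_letter (bs_inv_letter x) = x"
  by (simp add: bs_inv_letter_def)

lemma inv_word_inv[simp]: "inv_word (inv_word w) = w"
  by (simp add: inv_word_def rev_map comp_def)

lemma inv_word_append[simp]: "inv_word (u @ v) = inv_word v @ inv_word u"
  by (simp add: inv_word_def)

lemma cancel_inv: "bs_equiv m n (inv_word w @ w) []"
proof (induction w)
  case Nil then show ?case by (simp add: inv_word_def bs_equiv.refl)
next
  case (Cons x w)
  have "bs_equiv m n (inv_word w @ w) (inv_word w @ [bs_inv_letter x, x] @ w)"
    using bs_equiv.cancel[of m n "inv_word w" w "bs_inv_letter x"] by simp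
  then have "bs_equiv m n (inv_word (x # w) @ x # w) (inv_word w @ w)"
    by (simp add: inv_word_def bs_equiv.sym)
  then show ?case using Cons bs_equiv.trans by blast
qed

lemma cancel_inv2: "bs_equiv m n (w @ inv_word w) []"
  using cancel_inv[of m n "inv_word w"] by simp

lemma equiv_inv: assumes "bs_equiv m n u v" shows "bs_equiv m n (inv_word u) (inv_word v)"
proof -
  have 1: "bs_equiv m n (inv_word u) (inv_word u @ (v @ inv_word v))"
    using bs_cong[OF bs_equiv.sym[OF cancel_inv2[of m n v]], of "inv_word u" "[]"] by simp
  have 2: "bs_equiv m n (inv_word u @ (v @ inv_word v)) ((inv_word u @ u) @ inv_word v)"
    using bs_cong[OF bs_equiv.sym[OF assms], of "inv_word u" "inv_word v"] by simp
  have 3: "bs_equiv m n ((inv_word u @ u) @ inv_word v) (inv_word v)"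
    using bs_cong[OF cancel_inv[of m n u], of "[]" "inv_word v"] by simp
  show ?thesis using 1 2 3 bs_equiv.trans by blast
qed

lemma equiv_cancel_right: assumes "bs_equiv m n (u @ inv_word v) []" shows "bs_equiv m n u v"
proof -
  have "bs_equiv m n u (u @ inv_word v @ v)"
    using bs_cong[OF bs_equiv.sym[OF cancel_inv[of m n v]], of u "[]"] by simp
  moreover have "bs_equiv m n ((u @ inv_word v) @ v) ([] @ v)"
    using bs_cong[OF assms, of "[]" v] by simp
  ultimately show ?thesis using bs_equiv.trans by fastforce
qed

lemma inv_word_rep: "inv_word (replicate k x) = replicate k (bs_inv_letter x)"
  by (simp add: inv_word_def)

lemma invs[simp]: "bs_inv_letter lA = lA'" "bs_inv_letter lA' = lA" "bs_inv_letter lB = lB'" "bs_inv_letter lB' = lB"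
  by (auto simp: bs_inv_letter_def lA_def lA'_def lB_def lB'_def)

lemma cancel_pair: "bs_equiv m n (u @ [x, bs_inv_letter x] @ v) (u @ v)"
  by (rule bs_equiv.sym, rule bs_equiv.cancel)

lemma rel1: "bs_equiv m n ([lA] @ replicate m lB @ [lA']) (replicate n lB)"
proof -
  have a: "bs_equiv m n ([lA] @ replicate m lB @ [lA']) (([lA] @ replicate m lB @ [lA']) @ (replicate n lB' @ replicate n lB))"
    using bs_cong[OF bs_equiv.sym[OF cancel_inv[of m n "replicate n lB"]], of "[lA] @ replicate m lB @ [lA']" "[]"]
    by (simp add: inv_word_rep)
  have b: "([lA] @ replicate m lB @ [lA']) @ (replicate n lB' @ replicate n lB) = [] @ bs_relator m n @ replicate n lB"
    by (simp add: bs_relator_def lA_def lA'_def lB_def lB'_def)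
  have c: "bs_equiv m n ([] @ bs_relator m n @ replicate n lB) ([] @ replicate n lB)"
    by (rule bs_equiv.sym, rule bs_equiv.relator)
  show ?thesis using bs_equiv.trans[OF a[unfolded b] c] by simp
qed

lemma relj: "bs_equiv m n ([lA] @ replicate (j*m) lB @ [lA']) (replicate (j*n) lB)"
proof (induction j)
  case 0 then show ?case using cancel_pair[of m n "[]" lA "[]"] by simp
next
  case (Suc j)
  have "bs_equiv m n ([lA] @ replicate m lB @ replicate (j*m) lB @ [lA'])
           ([lA] @ replicate m lB @ [lA', lA] @ replicate (j*m) lB @ [lA'])"
    using bs_equiv.sym[OF cancel_pair[of m n "[lA] @ replicate m lB" lA' "replicate (j*m) lB @ [lA']"]] by simp
  moreover have "bs_equiv m n (([lA] @ replicate m lB @ [lA']) @ ([lA] @ replicate (j*m) lB @ [lA']))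
     (replicate n lB @ replicate (j*n) lB)"
    using bs_app[OF rel1 Suc.IH] .
  ultimately show ?case using bs_equiv.trans by (fastforce simp: replicate_add)
qed

lemma relj_neg: "bs_equiv m n ([lA] @ replicate (j*m) lB' @ [lA']) (replicate (j*n) lB')"
  using equiv_inv[OF relj[of m n j]] by (simp add: inv_word_rep inv_word_def)

lemma conj_back: assumes "bs_equiv m n ([lA] @ u @ [lA']) v"
  shows "bs_equiv m n ([lA'] @ v @ [lA]) u"
proof -
  have 1: "bs_equiv m n ([lA'] @ v @ [lA]) ([lA'] @ ([lA] @ u @ [lA']) @ [lA])"
    using bs_cong[OF bs_equiv.sym[OF assms], of "[lA']" "[lA]"] by simp
  have 2: "bs_equiv m n ([] @ [lA', bs_inv_letter lA'] @ (u @ [lA', bs_inv_letter lA'])) ([] @ (u @ [lA', bs_inv_letter lA']))"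
    by (rule cancel_pair)
  have 3: "bs_equiv m n (u @ [lA', bs_inv_letter lA'] @ []) (u @ [])"
    by (rule cancel_pair)
  have "[lA'] @ ([lA] @ u @ [lA']) @ [lA] = [] @ [lA', bs_inv_letter lA'] @ (u @ [lA', bs_inv_letter lA'])"
    by simp
  with 1 2 3 show ?thesis by (metis bs_equiv.trans append_Nil append_Nil2)
qed

definition bpow :: "int \<Rightarrow> bs_letter list" where
  "bpow k = (if 0 \<le> k then replicate (nat k) lB else replicate (nat (-k)) lB')"

definition bonly :: "bs_letter list \<Rightarrow> bool" where
  "bonly u \<longleftrightarrow> (\<forall>x\<in>set u. snd x = GenB)"

fun bsum :: "bs_letter list \<Rightarrow> int" where
  "bsum [] = 0"
| "bsum (x # u) = (if snd x = GenB then (if fst x then 1 else -1) else 0) + bsum u"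

definition acount :: "bs_letter list \<Rightarrow> nat" where
  "acount w = length (filter (\<lambda>x. snd x = GenA) w)"

lemma bsum_append[simp]: "bsum (u @ v) = bsum u + bsum v"
  by (induction u) auto

lemma bonly_bpow[simp]: "bonly (bpow k)"
  by (auto simp: bonly_def bpow_def lB_def lB'_def)

lemma acount_bonly: "bonly u \<Longrightarrow> acount u = 0"
  by (auto simp: acount_def bonly_def filter_empty_conv)

lemma acount_append[simp]: "acount (u @ v) = acount u + acount v"
  by (simp add: acount_def)

lemma bpow_cons: "bs_equiv m n ((s, GenB) # bpow k) (bpow (k + (if s then 1 else -1)))"
proof (cases s)
  case True
  show ?thesis
  proof (cases "0 \<le> k")
    case True
    have "nat (k+1) = Suc (nat k)" using True by simp
    then have "(s, GenB) # bpow k = bpow (k + 1)"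
      using \<open>s\<close> True by (simp add: bpow_def lB_def)
    then show ?thesis using \<open>s\<close> by (simp add: bs_equiv.refl)
  next
    case False
    then obtain j where j: "nat (-k) = Suc j" by (cases "nat (-k)") auto
    have "bs_equiv m n ([] @ [lB, bs_inv_letter lB] @ replicate j lB') ([] @ replicate j lB')"
      by (rule cancel_pair)
    moreover have "bpow (k + 1) = replicate j lB'" using False j
      by (auto simp: bpow_def)
    ultimately show ?thesis using \<open>s\<close> j False by (simp add: bpow_def lB_def lB'_def bs_inv_letter_def)
  qed
next
  case False
  show ?thesis
  proof (cases "k \<le> 0")
    case True
    have "nat (-(k-1)) = Suc (nat (-k))" using True by simp
    then have "(s, GenB) # bpow k = bpow (k - 1)"
      using \<open>\<not>s\<close> True by (auto simp: bpow_def lB'_def lB_def)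
    then show ?thesis using \<open>\<not>s\<close> by (simp add: bs_equiv.refl)
  next
    case False
    then obtain j where j: "nat k = Suc j" by (cases "nat k") auto
    have "bs_equiv m n ([] @ [lB', bs_inv_letter lB'] @ replicate j lB) ([] @ replicate j lB)"
      by (rule cancel_pair)
    moreover have "bpow (k - 1) = replicate j lB" using False j
      by (auto simp: bpow_def)
    ultimately show ?thesis using \<open>\<not>s\<close> j False by (simp add: bpow_def lB_def lB'_def bs_inv_letter_def)
  qed
qed

lemma bonly_equiv: "bonly u \<Longrightarrow> bs_equiv m n u (bpow (bsum u))"
proof (induction u)
  case Nil then show ?case by (simp add: bpow_def bs_equiv.refl)
next
  case (Cons x u)
  obtain s where x: "x = (s, GenB)" using Cons.prems by (cases x) (auto simp: bonly_def)
  have "bonly u" using Cons.prems by (auto simp: bonly_def)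
  then have "bs_equiv m n (x # u) (x # bpow (bsum u))"
    using bs_cong[OF Cons.IH, of "[x]" "[]"] by simp
  moreover have "bs_equiv m n (x # bpow (bsum u)) (bpow (bsum (x # u)))"
  proof -
    have "bsum (x # u) = bsum u + (if s then 1 else -1)" using x by simp
    then show ?thesis using bpow_cons[of m n s "bsum u"] x by (cases s) (simp_all add: add.commute)
  qed
  ultimately show ?case by (rule bs_equiv.trans)
qed

lemma bpow_pos: "0 \<le> q \<Longrightarrow> bpow (q * int k) = replicate (nat q * k) lB"
  by (simp add: bpow_def nat_mult_distrib)

lemma bpow_neg: assumes "q < 0" shows "bpow (q * int k) = replicate (nat (-q) * k) lB'"
proof (cases "k = 0")
  case True then show ?thesis by (simp add: bpow_def)
next
  case False
  then have "q * int k < 0" using assms by (simp add: mult_less_0_iff)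
  moreover have "nat (-(q * int k)) = nat (-q) * k"
    using nat_mult_distrib[of "-q" "int k"] assms by simp
  ultimately show ?thesis by (simp add: bpow_def)
qed

lemma pinch1:
  assumes "bonly u" "int m dvd bsum u"
  shows "bs_equiv m n ([lA] @ u @ [lA']) (bpow (bsum u div int m * int n))"
proof -
  obtain q where q: "bsum u = q * int m" using assms(2) by (metis dvdE mult.commute)
  have e1: "bs_equiv m n ([lA] @ u @ [lA']) ([lA] @ bpow (bsum u) @ [lA'])"
    using bs_cong[OF bonly_equiv[OF assms(1)]] by blast
  show ?thesis
  proof (cases "m = 0")
    case True
    then have "bsum u = 0" using q by simp
    moreover have "bs_equiv m n ([] @ [lA, bs_inv_letter lA] @ []) ([] @ [])" by (rule cancel_pair)
    ultimately show ?thesis using e1 True bs_equiv.trans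
      by (simp add: bpow_def)
  next
    case False
    then have d: "bsum u div int m = q" using q by simp
    have "bs_equiv m n ([lA] @ bpow (q * int m) @ [lA']) (bpow (q * int n))"
    proof (cases "0 \<le> q")
      case True
      then show ?thesis using relj[of m n "nat q"] by (simp add: bpow_pos)
    next
      case False
      then show ?thesis using relj_neg[of m n "nat (-q)"] by (simp add: bpow_neg)
    qed
    then show ?thesis using e1 q d bs_equiv.trans by metis
  qed
qed

lemma pinch2:
  assumes "bonly u" "int n dvd bsum u" "1 \<le> m" "m < n"
  shows "bs_equiv m n ([lA'] @ u @ [lA]) (bpow (bsum u div int n * int m))"
proof -
  obtain q where q: "bsum u = q * int n" using assms(2) by (metis dvdE mult.commute)
  have e1: "bs_equiv m n ([lA'] @ u @ [lA]) ([lA'] @ bpow (bsum u) @ [lA])"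
    using bs_cong[OF bonly_equiv[OF assms(1)]] by blast
  have d: "bsum u div int n = q" using q assms by simp
  have "bs_equiv m n ([lA] @ bpow (q * int m) @ [lA']) (bpow (q * int n))"
  proof (cases "0 \<le> q")
    case True
    then show ?thesis using relj[of m n "nat q"] by (simp add: bpow_pos)
  next
    case False
    then show ?thesis using relj_neg[of m n "nat (-q)"] by (simp add: bpow_neg)
  qed
  from conj_back[OF this] show ?thesis using e1 d q bs_equiv.trans by metis
qed

definition rho :: "(bs_letter \<Rightarrow> 'x \<Rightarrow> 'x) \<Rightarrow> bs_letter list \<Rightarrow> 'x \<Rightarrow> 'x" where
  "rho g w = foldr (\<lambda>l f. g l \<circ> f) w id"

lemma rho_Nil[simp]: "rho g [] = id" by (simp add: rho_def)
lemma rho_Cons[simp]: "rho g (x # w) = g x \<circ> rho g w" by (simp add: rho_def)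
lemma rho_append[simp]: "rho g (u @ v) = rho g u \<circ> rho g v"
  by (induction u) (simp_all add: o_assoc)

lemma rho_equiv:
  assumes inv: "\<And>l. g l \<circ> g (bs_inv_letter l) = id" and rel: "rho g (bs_relator m n) = id"
  shows "bs_equiv m n u v \<Longrightarrow> rho g u = rho g v"
proof (induction rule: bs_equiv.induct)
  case (cancel u v x)
  have "rho g [x, bs_inv_letter x] = id" using inv[of x] by simp
  then show ?case by (simp add: o_assoc)
next
  case (relator u v)
  then show ?case using rel by (simp add: o_assoc)
qed auto

lemma bs_rel_equiv: "equiv UNIV (bs_rel m n)"
  unfolding equiv_def refl_on_def sym_def trans_def bs_rel_def
  by (auto intro: bs_equiv.refl bs_equiv.sym bs_equiv.trans)

lemma class_eq: "bs_rel m n `` {u} = bs_rel m n `` {v} \<longleftrightarrow> bs_equiv m n u v"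
  using eq_equiv_class_iff[OF bs_rel_equiv, of u v m n] by (simp add: bs_rel_def)

lemma mem_class: "v \<in> bs_rel m n `` {u} \<longleftrightarrow> bs_equiv m n u v" by (simp add: bs_rel_def)

lemma class_mult: "(\<Union>x\<in>bs_rel m n``{u}. \<Union>y\<in>bs_rel m n``{v}. bs_rel m n `` {x @ y}) = bs_rel m n `` {u @ v}"
proof -
  have e: "bs_rel m n `` {x @ y} = bs_rel m n `` {u @ v}" if "x \<in> bs_rel m n``{u}" "y \<in> bs_rel m n``{v}" for x y
    using that unfolding class_eq mem_class by (metis bs_app bs_equiv.sym)
  have "u \<in> bs_rel m n``{u}" "v \<in> bs_rel m n``{v}" by (simp_all add: bs_rel_def bs_equiv.refl)
  then show ?thesis using e by blast
qed

lemma embed: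
  fixes G :: "('x \<Rightarrow> 'x) monoid" and g :: "bs_letter \<Rightarrow> 'x \<Rightarrow> 'x"
  assumes mult: "\<And>f h. mult G f h = f \<circ> h" and one: "one G = id"
    and carr: "\<And>w. rho g w \<in> carrier G"
    and inv: "\<And>l. g l \<circ> g (bs_inv_letter l) = id"
    and rel: "rho g (bs_relator m n) = id"
    and faith: "\<And>w. rho g w = id \<Longrightarrow> bs_equiv m n w []"
  shows "contains_copy_of G (BS m n)"
proof -
  have req: "bs_equiv m n u v \<Longrightarrow> rho g u = rho g v" for u v using rho_equiv[OF inv rel] .
  have rinv1: "rho g w \<circ> rho g (inv_word w) = id" for w
    using req[OF cancel_inv2[of m n w]] by simp
  have rinv2: "rho g (inv_word w) \<circ> rho g w = id" for w
    using req[OF cancel_inv[of m n w]] by simp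
  define K where "K = range (rho g)"
  have minv: "inv\<^bsub>G\<^esub> (rho g w) = rho g (inv_word w)" for w
    unfolding m_inv_def mult one
  proof (rule the_equality)
    show "rho g (inv_word w) \<in> carrier G \<and> rho g w \<circ> rho g (inv_word w) = id \<and> rho g (inv_word w) \<circ> rho g w = id"
      using carr rinv1 rinv2 by blast
  next
    fix y assume "y \<in> carrier G \<and> rho g w \<circ> y = id \<and> y \<circ> rho g w = id"
    have "y = y \<circ> (rho g w \<circ> rho g (inv_word w))" using rinv1 by simp
    also have "\<dots> = (y \<circ> rho g w) \<circ> rho g (inv_word w)" by (simp add: o_assoc)
    finally have "y = (y \<circ> rho g w) \<circ> rho g (inv_word w)" .
    then show "y = rho g (inv_word w)" using \<open>y \<in> carrier G \<and> rho g w \<circ> y = id \<and> y \<circ> rho g w = id\<close> by simp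
  qed
  have sub: "subgroup K G"
    unfolding subgroup_def
  proof (intro conjI allI impI)
    show "K \<subseteq> carrier G" using carr K_def by auto
  next
    fix x y assume "x \<in> K" "y \<in> K"
    then obtain u v where "x = rho g u" "y = rho g v" by (auto simp: K_def)
    then show "x \<otimes>\<^bsub>G\<^esub> y \<in> K" by (simp add: mult K_def) (metis rho_append rangeI)
  next
    show "\<one>\<^bsub>G\<^esub> \<in> K" by (simp add: one K_def) (metis rho_Nil rangeI)
  next
    fix x assume "x \<in> K"
    then obtain u where "x = rho g u" by (auto simp: K_def)
    then show "inv\<^bsub>G\<^esub> x \<in> K" by (simp add: minv K_def)
  qed
  define h where "h X = rho g (SOME w. w \<in> X)" for X :: "bs_letter list set"
  have hcl: "h (bs_rel m n `` {w}) = rho g w" for w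
  proof -
    have "w \<in> bs_rel m n `` {w}" by (simp add: bs_rel_def bs_equiv.refl)
    then have "(SOME w'. w' \<in> bs_rel m n `` {w}) \<in> bs_rel m n `` {w}" by (rule someI)
    then show ?thesis unfolding h_def mem_class using req by (metis)
  qed
  have carrBS: "carrier (BS m n) = UNIV // bs_rel m n" by (simp add: BS_def)
  have clE: "\<exists>w. X = bs_rel m n `` {w}" if "X \<in> carrier (BS m n)" for X
    using that carrBS by (auto elim!: quotientE)
  have multBS: "X \<otimes>\<^bsub>BS m n\<^esub> Y = bs_rel m n `` {u @ v}" if "X = bs_rel m n `` {u}" "Y = bs_rel m n `` {v}" for X Y u v
    using that class_mult by (simp add: BS_def)
  have "h \<in> Group.iso (BS m n) (G\<lparr>carrier := K\<rparr>)"
    unfolding Group.iso_def hom_def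
  proof (intro CollectI conjI ballI)
    show "h \<in> carrier (BS m n) \<rightarrow> carrier (G\<lparr>carrier := K\<rparr>)"
      using clE hcl by (auto simp: K_def)
  next
    fix X Y assume "X \<in> carrier (BS m n)" "Y \<in> carrier (BS m n)"
    then obtain u v where uv: "X = bs_rel m n `` {u}" "Y = bs_rel m n `` {v}" using clE by blast
    show "h (X \<otimes>\<^bsub>BS m n\<^esub> Y) = h X \<otimes>\<^bsub>G\<lparr>carrier := K\<rparr>\<^esub> h Y"
      using multBS[OF uv] uv hcl by (simp add: mult)
  next
    show "bij_betw h (carrier (BS m n)) (carrier (G\<lparr>carrier := K\<rparr>))"
      unfolding bij_betw_def
    proof
      show "inj_on h (carrier (BS m n))"
      proof (rule inj_onI)
        fix X Y assume "X \<in> carrier (BS m n)" "Y \<in> carrier (BS m n)" "h X = h Y"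
        then obtain u v where uv: "X = bs_rel m n `` {u}" "Y = bs_rel m n `` {v}" using clE by blast
        then have "rho g u = rho g v" using \<open>h X = h Y\<close> hcl by simp
        then have "rho g (u @ inv_word v) = id" using rinv1[of v] by simp
        then have "bs_equiv m n (u @ inv_word v) []" by (rule faith)
        then have "bs_equiv m n u v" by (rule equiv_cancel_right)
        then show "X = Y" using uv class_eq by simp
      qed
    next
      show "h ` carrier (BS m n) = carrier (G\<lparr>carrier := K\<rparr>)"
      proof
        show "h ` carrier (BS m n) \<subseteq> carrier (G\<lparr>carrier := K\<rparr>)" using clE hcl by (auto simp: K_def)
      next
        show "carrier (G\<lparr>carrier := K\<rparr>) \<subseteq> h ` carrier (BS m n)"
        proof
          fix f assume "f \<in> carrier (G\<lparr>carrier := K\<rparr>)"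
          then obtain w where "f = rho g w" by (auto simp: K_def)
          moreover have "bs_rel m n `` {w} \<in> carrier (BS m n)" using carrBS by (auto intro: quotientI)
          ultimately show "f \<in> h ` carrier (BS m n)" using hcl by (metis image_eqI)
        qed
      qed
    qed
  qed
  then show ?thesis unfolding contains_copy_of_def is_iso_def using sub by blast
qed

definition inXm :: "nat \<Rightarrow> real \<Rightarrow> bool" where
  "inXm m x \<longleftrightarrow> (\<exists>j::int. \<bar>x - of_int j * real m\<bar> < 1/8)"
definition inXp :: "nat \<Rightarrow> real \<Rightarrow> bool" where
  "inXp n x \<longleftrightarrow> (\<exists>j::int. \<bar>x - 1/2 - of_int j * real n\<bar> < 1/8)"
definition inX :: "nat \<Rightarrow> nat \<Rightarrow> bool \<Rightarrow> real \<Rightarrow> bool" where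
  "inX m n e x = (if e then inXp n x else inXm m x)"

definition gR :: "(real \<Rightarrow> real) \<Rightarrow> (real \<Rightarrow> real) \<Rightarrow> bs_letter \<Rightarrow> real \<Rightarrow> real" where
  "gR fa fa' l = (case l of (s, GenA) \<Rightarrow> if s then fa else fa'
                         | (s, GenB) \<Rightarrow> if s then (\<lambda>x. x + 1) else (\<lambda>x. x - 1))"

fun info :: "bs_letter list \<Rightarrow> (bool \<times> int) option" where
  "info [] = None"
| "info (x # w) = (if snd x = GenA then Some (fst x, 0)
     else (case info w of None \<Rightarrow> None | Some (e, k) \<Rightarrow> Some (e, k + (if fst x then 1 else -1))))"

fun ok :: "nat \<Rightarrow> nat \<Rightarrow> bool \<Rightarrow> (bool \<times> int) option \<Rightarrow> bool" where
  "ok m n s None = True"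
| "ok m n s (Some (e, k)) = (\<not> (s \<and> \<not> e \<and> int m dvd k) \<and> \<not> (\<not> s \<and> e \<and> int n dvd k))"

fun nopinch :: "nat \<Rightarrow> nat \<Rightarrow> bs_letter list \<Rightarrow> bool" where
  "nopinch m n [] = True"
| "nopinch m n (x # w) = (nopinch m n w \<and> (snd x = GenA \<longrightarrow> ok m n (fst x) (info w)))"

lemma int_no_between: "0 < real_of_int z \<Longrightarrow> real_of_int z < 1 \<Longrightarrow> False"
  by (metis of_int_0_less_iff of_int_less_1_iff zless_imp_add1_zle not_le add_0 )

lemma int_zero: "-1 < real_of_int z \<Longrightarrow> real_of_int z < 1 \<Longrightarrow> z = 0"
proof -
  assume a: "-1 < real_of_int z" "real_of_int z < 1"
  have "-1 < z" using a(1) by (metis of_int_less_iff of_int_minus of_int_1)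
  moreover have "z < 1" using a(2) by simp
  ultimately show ?thesis by simp
qed

lemma abs8: "\<bar>x\<bar> < (1/8::real) \<Longrightarrow> x < 1/8 \<and> -1/8 < x" by auto

lemma F1m: "\<not> inXm m (1/4 + of_int i)"
proof
  assume "inXm m (1/4 + of_int i)"
  then obtain j where "\<bar>1/4 + of_int i - of_int j * real m\<bar> < 1/8" by (auto simp: inXm_def)
  from abs8[OF this] have "0 < real_of_int i - of_int j * real m + 1" "real_of_int i - of_int j * real m + 1 < 1" by linarith+
  then have "0 < real_of_int (i - j * int m + 1)" "real_of_int (i - j * int m + 1) < 1" by simp_all
  then show False by (rule int_no_between)
qed

lemma F1p: "\<not> inXp n (1/4 + of_int i)"
proof
  assume "inXp n (1/4 + of_int i)"
  then obtain j where "\<bar>1/4 + of_int i - 1/2 - of_int j * real n\<bar> < 1/8" by (auto simp: inXp_def)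
  from abs8[OF this] have "0 < real_of_int i - of_int j * real n" "real_of_int i - of_int j * real n < 1" by linarith+
  then have "0 < real_of_int (i - j * int n)" "real_of_int (i - j * int n) < 1" by simp_all
  then show False by (rule int_no_between)
qed

lemma F2a: "inXm m (y - of_int k) \<Longrightarrow> \<not> inXp n y"
proof
  assume "inXm m (y - of_int k)" "inXp n y"
  then obtain j j' where a: "\<bar>y - of_int k - of_int j * real m\<bar> < 1/8" and b: "\<bar>y - 1/2 - of_int j' * real n\<bar> < 1/8"
    by (auto simp: inXm_def inXp_def)
  from abs8[OF a] abs8[OF b] have "0 < real_of_int k + of_int j * real m - of_int j' * real n"
     "real_of_int k + of_int j * real m - of_int j' * real n < 1" by linarith+
  then have "0 < real_of_int (k + j * int m - j' * int n)" "real_of_int (k + j * int m - j' * int n) < 1" by simp_all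
  then show False by (rule int_no_between)
qed

lemma F2b: "inXp n (y - of_int k) \<Longrightarrow> \<not> inXm m y"
proof
  assume "inXp n (y - of_int k)" "inXm m y"
  then obtain j j' where a: "\<bar>y - of_int k - 1/2 - of_int j * real n\<bar> < 1/8" and b: "\<bar>y - of_int j' * real m\<bar> < 1/8"
    by (auto simp: inXm_def inXp_def)
  from abs8[OF a] abs8[OF b] have "0 < of_int j' * real m - real_of_int k - of_int j * real n"
     "of_int j' * real m - real_of_int k - of_int j * real n < 1" by linarith+
  then have "0 < real_of_int (j' * int m - k - j * int n)" "real_of_int (j' * int m - k - j * int n) < 1" by simp_all
  then show False by (rule int_no_between)
qed

lemma F3m: assumes "inXm m (y - of_int k)" "inXm m y" shows "int m dvd k"
proof -
  obtain j j' where a: "\<bar>y - of_int k - of_int j * real m\<bar> < 1/8" and b: "\<bar>y - of_int j' * real m\<bar> < 1/8"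
    using assms by (auto simp: inXm_def)
  from abs8[OF a] abs8[OF b] have "-1 < of_int j' * real m - real_of_int k - of_int j * real m"
     "of_int j' * real m - real_of_int k - of_int j * real m < 1" by linarith+
  then have "-1 < real_of_int (j' * int m - k - j * int m)" "real_of_int (j' * int m - k - j * int m) < 1" by simp_all
  then have "j' * int m - k - j * int m = 0" by (rule int_zero)
  then have "k = (j' - j) * int m" by (simp add: algebra_simps)
  then show ?thesis by simp
qed

lemma F3p: assumes "inXp n (y - of_int k)" "inXp n y" shows "int n dvd k"
proof -
  obtain j j' where a: "\<bar>y - of_int k - 1/2 - of_int j * real n\<bar> < 1/8" and b: "\<bar>y - 1/2 - of_int j' * real n\<bar> < 1/8"
    using assms by (auto simp: inXp_def)
  from abs8[OF a] abs8[OF b] have "-1 < of_int j' * real n - real_of_int k - of_int j * real n"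
     "of_int j' * real n - real_of_int k - of_int j * real n < 1" by linarith+
  then have "-1 < real_of_int (j' * int n - k - j * int n)" "real_of_int (j' * int n - k - j * int n) < 1" by simp_all
  then have "j' * int n - k - j * int n = 0" by (rule int_zero)
  then have "k = (j' - j) * int n" by (simp add: algebra_simps)
  then show ?thesis by simp
qed

lemma gR_A[simp]: "gR fa fa' (s, GenA) = (if s then fa else fa')" by (simp add: gR_def)
lemma gR_B[simp]: "gR fa fa' (s, GenB) = (if s then (\<lambda>x. x + 1) else (\<lambda>x. x - 1))" by (simp add: gR_def)

lemma pp_inv:
  fixes fa fa' :: "real \<Rightarrow> real"
  assumes P1: "\<And>x. \<not> inXm m x \<Longrightarrow> inXp n (fa x)" and P2: "\<And>y. \<not> inXp n y \<Longrightarrow> inXm m (fa' y)"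
  shows "nopinch m n w \<Longrightarrow> (info w = None \<longrightarrow> rho (gR fa fa') w (1/4) = 1/4 + of_int (bsum w))
     \<and> (\<forall>e k. info w = Some (e, k) \<longrightarrow> inX m n e (rho (gR fa fa') w (1/4) - of_int k))"
proof (induction w)
  case Nil then show ?case by simp
next
  case (Cons x w)
  obtain s t where x: "x = (s, t)" by (cases x)
  have nw: "nopinch m n w" using Cons.prems by simp
  note IH = Cons.IH[OF nw]
  define y where "y = rho (gR fa fa') w (1/4)"
  show ?case
  proof (cases t)
    case GenB
    show ?thesis
    proof (cases "info w")
      case None
      then show ?thesis using IH x GenB by (auto simp: y_def)
    next
      case (Some ek)
      obtain e k where ek: "info w = Some (e, k)" using Some by (cases ek) auto
      then show ?thesis using IH x GenB by (auto simp: y_def algebra_simps)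
    qed
  next
    case GenA
    have okk: "ok m n s (info w)" using Cons.prems x GenA by simp
    have notX: "\<not> inX m n (\<not> s) y"
    proof (cases "info w")
      case None
      then have "y = 1/4 + of_int (bsum w)" using IH y_def by simp
      then show ?thesis using F1m F1p by (auto simp: inX_def)
    next
      case (Some ek)
      obtain e k where ek: "info w = Some (e, k)" using Some by (cases ek) auto
      then have iy: "inX m n e (y - of_int k)" using IH y_def by simp
      have okk': "\<not> (s \<and> \<not> e \<and> int m dvd k) \<and> \<not> (\<not> s \<and> e \<and> int n dvd k)" using okk ek by simp
      show ?thesis
      proof (cases s)
        case True
        then show ?thesis using iy okk' F2b[of n y k m] F3m[of m y k] by (cases e) (auto simp: inX_def)
      next
        case False
        then show ?thesis using iy okk' F2a[of m y k n] F3p[of n y k] by (cases e) (auto simp: inX_def)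
      qed
    qed
    have "rho (gR fa fa') (x # w) (1/4) = (if s then fa else fa') y" using x GenA y_def by simp
    moreover have "inX m n s ((if s then fa else fa') y)"
      using notX P1 P2 by (cases s) (auto simp: inX_def)
    ultimately show ?thesis using x GenA by simp
  qed
qed

lemma info_None: "info w = None \<longleftrightarrow> acount w = 0"
proof (induction w)
  case (Cons x w) then show ?case by (cases "info w") (auto simp: acount_def)
qed (simp add: acount_def)

lemma acount0_bonly: "acount w = 0 \<Longrightarrow> bonly w"
  unfolding acount_def bonly_def filter_empty_conv length_0_conv by (metis bs_gen.exhaust)

lemma info_Some: "info w = Some (e, k) \<Longrightarrow> \<exists>u q. w = u @ (e, GenA) # q \<and> bonly u \<and> bsum u = k"
proof (induction w arbitrary: k)
  case Nil then show ?case by simp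
next
  case (Cons x w)
  obtain s t where x: "x = (s, t)" by (cases x)
  show ?case
  proof (cases t)
    case GenA
    then have "s = e" "k = 0" using Cons.prems x by auto
    then show ?thesis using x GenA by (intro exI[of _ "[]"] exI[of _ w]) (auto simp: bonly_def)
  next
    case GenB
    then obtain k' where k': "info w = Some (e, k')" "k = k' + (if s then 1 else -1)"
      using Cons.prems x by (auto split: option.splits)
    obtain u q where "w = u @ (e, GenA) # q" "bonly u" "bsum u = k'" using Cons.IH[OF k'(1)] by blast
    then show ?thesis using x GenB k'(2)
      by (intro exI[of _ "x # u"] exI[of _ q]) (auto simp: bonly_def)
  qed
qed

lemma pinch_split: "\<not> nopinch m n w \<Longrightarrow> \<exists>p x w'. w = p @ x # w' \<and> snd x = GenA \<and> \<not> ok m n (fst x) (info w')"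
proof (induction w)
  case Nil then show ?case by simp
next
  case (Cons x w)
  show ?case
  proof (cases "nopinch m n w")
    case True
    then have "snd x = GenA" "\<not> ok m n (fst x) (info w)" using Cons.prems by auto
    then show ?thesis by (intro exI[of _ "[]"]) auto
  next
    case False
    then obtain p y w' where "w = p @ y # w'" "snd y = GenA" "\<not> ok m n (fst y) (info w')"
      using Cons.IH by blast
    then show ?thesis by (intro exI[of _ "x # p"]) auto
  qed
qed

lemma reduce:
  assumes "\<not> nopinch m n w" "1 \<le> m" "m < n"
  shows "\<exists>w'. bs_equiv m n w w' \<and> acount w' < acount w"
proof -
  obtain p x w' where w: "w = p @ x # w'" "snd x = GenA" "\<not> ok m n (fst x) (info w')"
    using pinch_split[OF assms(1)] by blast
  obtain s where x: "x = (s, GenA)" using w(2) by (cases x) auto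
  obtain e k where ek: "info w' = Some (e, k)" using w(3) by (cases "info w'") auto
  obtain u q where uq: "w' = u @ (e, GenA) # q" "bonly u" "bsum u = k" using info_Some[OF ek] by blast
  have bad: "(s \<and> \<not> e \<and> int m dvd k) \<or> (\<not> s \<and> e \<and> int n dvd k)" using w(3) ek x by auto
  have au: "acount u = 0" using uq(2) by (rule acount_bonly)
  show ?thesis
  proof (cases s)
    case True
    then have "\<not> e" "int m dvd bsum u" using bad uq by auto
    then have w2: "w = p @ ([lA] @ u @ [lA']) @ q" using w x uq True by (simp add: lA_def lA'_def)
    have "bs_equiv m n w (p @ bpow (bsum u div int m * int n) @ q)"
      unfolding w2 by (rule bs_cong, rule pinch1) (use uq \<open>int m dvd bsum u\<close> in auto)
    moreover have "acount (p @ bpow (bsum u div int m * int n) @ q) < acount w"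
      using w2 au acount_bonly[OF bonly_bpow] by (simp add: acount_def lA_def lA'_def)
    ultimately show ?thesis by blast
  next
    case False
    then have "e" "int n dvd bsum u" using bad uq by auto
    then have w2: "w = p @ ([lA'] @ u @ [lA]) @ q" using w x uq False by (simp add: lA_def lA'_def)
    have "bs_equiv m n w (p @ bpow (bsum u div int n * int m) @ q)"
      unfolding w2 by (rule bs_cong, rule pinch2) (use uq \<open>int n dvd bsum u\<close> assms in auto)
    moreover have "acount (p @ bpow (bsum u div int n * int m) @ q) < acount w"
      using w2 au acount_bonly[OF bonly_bpow] by (simp add: acount_def lA_def lA'_def)
    ultimately show ?thesis by blast
  qed
qed

lemma faithful_R:
  fixes fa fa' :: "real \<Rightarrow> real"
  assumes mn: "1 \<le> m" "m < n"
    and P1: "\<And>x. \<not> inXm m x \<Longrightarrow> inXp n (fa x)" and P2: "\<And>y. \<not> inXp n y \<Longrightarrow> inXm m (fa' y)"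
    and inv: "\<And>l. gR fa fa' l \<circ> gR fa fa' (bs_inv_letter l) = id"
    and rel: "rho (gR fa fa') (bs_relator m n) = id"
  shows "rho (gR fa fa') w = id \<Longrightarrow> bs_equiv m n w []"
proof (induction "acount w" arbitrary: w rule: less_induct)
  case less
  show ?case
  proof (cases "nopinch m n w")
    case True
    note I = pp_inv[where fa=fa and fa'=fa' and m=m and n=n and w=w, OF P1 P2 True]
    show ?thesis
    proof (cases "info w")
      case None
      then have "1/4 = 1/4 + real_of_int (bsum w)" using I less.prems by simp
      then have "bsum w = 0" by simp
      moreover have "bonly w" using None info_None acount0_bonly by blast
      ultimately show ?thesis using bonly_equiv[of w m n] by (simp add: bpow_def)
    next
      case (Some ek)
      obtain e k where ek: "info w = Some (e, k)" using Some by (cases ek) auto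
      then have "inX m n e (1/4 - of_int k)" using I less.prems by simp
      moreover have "1/4 - real_of_int k = 1/4 + of_int (-k)" by simp
      ultimately have "inX m n e (1/4 + of_int (-k))" by metis
      then show ?thesis using F1m[of m "-k"] F1p[of n "-k"] by (cases e) (simp_all only: inX_def if_True if_False)
    qed
  next
    case False
    obtain w' where w': "bs_equiv m n w w'" "acount w' < acount w" using reduce[OF False mn] by blast
    have "rho (gR fa fa') w' = id" using rho_equiv[OF inv rel w'(1)] less.prems by simp
    then have "bs_equiv m n w' []" using less.hyps w'(2) by blast
    then show ?thesis using w'(1) bs_equiv.trans by blast
  qed
qed

definition ext_holo :: "(real \<Rightarrow> real) \<Rightarrow> bool" where
  "ext_holo f \<longleftrightarrow> (\<exists>F S. open S \<and> (\<forall>x. complex_of_real x \<in> S) \<and> F holomorphic_on S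
      \<and> (\<forall>x. F (of_real x) = of_real (f x)))"

lemma ext_holo_analytic: assumes "ext_holo f" shows "real_analytic f"
  unfolding real_analytic_def real_analytic_at_def
proof
  fix x :: real
  obtain F S where S: "open S" "\<And>x. complex_of_real x \<in> S" "F holomorphic_on S"
    "\<And>x. F (of_real x) = of_real (f x)"
    using assms unfolding ext_holo_def by blast
  obtain e where e: "e > 0" "ball (complex_of_real x) e \<subseteq> S"
    using S(1,2) open_contains_ball by blast
  define c where "c k = Re ((deriv ^^ k) F (of_real x) / fact k)" for k
  have "\<forall>y. \<bar>y - x\<bar> < e \<longrightarrow> (\<lambda>k. c k * (y - x) ^ k) sums f y"
  proof (intro allI impI)
    fix y :: real assume y: "\<bar>y - x\<bar> < e"
    have yb: "complex_of_real y \<in> ball (of_real x) e"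
      using y by (simp add: dist_norm norm_of_real abs_minus_commute flip: of_real_diff)
    have "(\<lambda>k. (deriv ^^ k) F (of_real x) / fact k * (of_real y - of_real x) ^ k) sums F (of_real y)"
      by (rule holomorphic_power_series[OF holomorphic_on_subset[OF S(3) e(2)] yb])
    from sums_Re[OF this] have "(\<lambda>k. Re ((deriv ^^ k) F (of_real x) / fact k * (of_real y - of_real x) ^ k)) sums f y"
      using S(4) by simp
    moreover have "Re ((deriv ^^ k) F (of_real x) / fact k * (of_real y - of_real x) ^ k) = c k * (y - x) ^ k" for k
    proof -
      have pe: "(of_real y - of_real x) ^ k = complex_of_real ((y - x) ^ k)" by simp
      have r1: "Re (w * complex_of_real p) = Re w * p" for w p by simp
      show ?thesis unfolding c_def pe by (rule r1)
    qed
    ultimately show "(\<lambda>k. c k * (y - x) ^ k) sums f y" by simp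
  qed
  then show "\<exists>r>0. \<exists>c. \<forall>y. \<bar>y - x\<bar> < r \<longrightarrow> (\<lambda>k. c k * (y - x) ^ k) sums f y"
    using e(1) by blast
qed

lemma ext_holo_comp: assumes "ext_holo f" "ext_holo g" shows "ext_holo (f \<circ> g)"
proof -
  obtain F S where S: "open S" "\<And>x. complex_of_real x \<in> S" "F holomorphic_on S"
    "\<And>x. F (of_real x) = of_real (f x)"
    using assms(1) unfolding ext_holo_def by blast
  obtain G T where T: "open T" "\<And>x. complex_of_real x \<in> T" "G holomorphic_on T"
    "\<And>x. G (of_real x) = of_real (g x)"
    using assms(2) unfolding ext_holo_def by blast
  define U where "U = T \<inter> G -` S"
  have "open U" unfolding U_def
    by (rule continuous_open_preimage[OF holomorphic_on_imp_continuous_on[OF T(3)] T(1) S(1)])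
  moreover have "\<forall>x. complex_of_real x \<in> U" using T S by (simp add: U_def)
  moreover have "(F \<circ> G) holomorphic_on U"
    by (rule holomorphic_on_compose_gen[OF holomorphic_on_subset[OF T(3)] S(3)]) (auto simp: U_def)
  moreover have "\<forall>x. (F \<circ> G) (of_real x) = of_real ((f \<circ> g) x)" using S T by simp
  ultimately show ?thesis unfolding ext_holo_def by blast
qed

lemma ext_holo_affine: "ext_holo (\<lambda>x. a * x + b)"
  unfolding ext_holo_def
  by (rule exI[of _ "\<lambda>z. of_real a * z + of_real b"], rule exI[of _ UNIV]) (auto intro!: holomorphic_intros)

definition AC :: "real \<Rightarrow> complex \<Rightarrow> complex" where
  "AC r z = z + \<i> * (Ln (1 - of_real r * exp (\<i> * z)) - Ln (1 - of_real r * exp (- (\<i> * z))))"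

definition Am :: "real \<Rightarrow> real \<Rightarrow> real" where
  "Am r t = t + 2 * arctan (r * sin t / (1 - r * cos t))"

lemma rcos_lt: "\<bar>r\<bar> < 1 \<Longrightarrow> r * cos t < (1::real)"
proof -
  assume "\<bar>r\<bar> < 1"
  have "\<bar>r * cos t\<bar> \<le> \<bar>r\<bar>" using abs_cos_le_one[of t] by (simp add: abs_mult mult_left_le)
  then show ?thesis using \<open>\<bar>r\<bar> < 1\<close> by linarith
qed

lemma Re_pos1: "\<bar>r\<bar> < 1 \<Longrightarrow> 0 < Re (1 - of_real r * exp (\<i> * of_real t))"
  using rcos_lt[of r t] by (simp flip: cis_conv_exp)

lemma Re_pos2: "\<bar>r\<bar> < 1 \<Longrightarrow> 0 < Re (1 - of_real r * exp (- (\<i> * of_real t)))"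
  using rcos_lt[of r "-t"] Re_pos1[of r "-t"] by simp

lemma AC_real: assumes "\<bar>r\<bar> < 1" shows "AC r (of_real t) = of_real (Am r t)"
proof -
  define w where "w = 1 - of_real r * exp (\<i> * of_real t)"
  have e1: "exp (- (\<i> * of_real t)) = cis (-t)" by (simp add: cis_conv_exp)
  have e2: "exp (\<i> * of_real t) = cis t" by (simp add: cis_conv_exp)
  have w2: "1 - of_real r * exp (- (\<i> * of_real t)) = cnj w"
    unfolding w_def e1 e2 by (simp add: complex_eq_iff)
  have rw: "0 < Re w" using Re_pos1[OF assms] by (simp add: w_def)
  then have wnp: "w \<notin> \<real>\<^sub>\<le>\<^sub>0" by (auto simp: complex_nonpos_Reals_iff)
  have L: "Ln (cnj w) = cnj (Ln w)" using cnj_Ln[OF wnp] by simp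
  have "Im (Ln w) = arctan (Im w / Re w)"
    using rw Arg_eq_Im_Ln[of w] arg_conv_arctan[OF rw] by fastforce
  moreover have "Im w = - (r * sin t)" "Re w = 1 - r * cos t"
    by (simp_all add: w_def flip: cis_conv_exp)
  ultimately have Im: "Im (Ln w) = - arctan (r * sin t / (1 - r * cos t))"
    by (simp add: arctan_minus)
  show ?thesis
    unfolding AC_def w2[folded w_def] L
    by (rule complex_eqI) (simp_all add: Am_def w_def[symmetric] Im)
qed

lemma ext_holo_Am: assumes "\<bar>r\<bar> < 1" shows "ext_holo (Am r)"
proof -
  define S where "S = {z. 0 < Re (1 - of_real r * exp (\<i> * z))} \<inter> {z. 0 < Re (1 - of_real r * exp (- (\<i> * z)))}"
  have "open S" unfolding S_def
    by (intro open_Int open_Collect_less continuous_intros)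
  moreover have "\<forall>x. complex_of_real x \<in> S" using Re_pos1[OF assms] Re_pos2[OF assms] by (simp add: S_def)
  moreover have "AC r holomorphic_on S" unfolding AC_def
    by (auto intro!: holomorphic_intros simp: complex_nonpos_Reals_iff S_def)
  moreover have "\<forall>x. AC r (of_real x) = of_real (Am r x)" using AC_real[OF assms] by simp
  ultimately show ?thesis unfolding ext_holo_def by blast
qed

lemma mob_comp: fixes c r :: complex assumes d1: "1 - r * c \<noteq> 0" and r2: "1 - r^2 \<noteq> 0"
  shows "((c - r) / (1 - r * c) + r) / (1 + r * ((c - r) / (1 - r * c))) = c"
proof -
  have a: "(c - r) / (1 - r * c) + r = c * (1 - r^2) / (1 - r * c)"
    using d1 by (simp add: field_simps power2_eq_square)
  have b: "1 + r * ((c - r) / (1 - r * c)) = (1 - r^2) / (1 - r * c)"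
    using d1 by (simp add: field_simps power2_eq_square)
  show ?thesis unfolding a b using d1 r2 by simp
qed

lemma cis_Am: assumes "\<bar>r\<bar> < 1"
  shows "cis (Am r t) = (cis t - of_real r) / (1 - of_real r * cis t)"
proof -
  define w1 where "w1 = 1 - of_real r * exp (\<i> * of_real t)"
  define w2 where "w2 = 1 - of_real r * exp (- (\<i> * of_real t))"
  have n1: "w1 \<noteq> 0" using Re_pos1[OF assms, of t] unfolding w1_def[symmetric] by auto
  have n2: "w2 \<noteq> 0" using Re_pos2[OF assms, of t] unfolding w2_def[symmetric] by auto
  have "cis (Am r t) = exp (\<i> * AC r (of_real t))" by (simp add: AC_real[OF assms] cis_conv_exp)
  also have "\<i> * AC r (of_real t) = \<i> * of_real t - Ln w1 + Ln w2"
    by (simp add: AC_def w1_def w2_def algebra_simps)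
  also have "exp (\<i> * of_real t - Ln w1 + Ln w2) = exp (\<i> * of_real t) * w2 / w1"
    using n1 n2 by (simp add: exp_add exp_diff)
  also have "exp (\<i> * of_real t) * w2 = cis t - of_real r"
  proof -
    have "exp (\<i> * of_real t) * exp (- (\<i> * of_real t)) = 1" by (simp flip: exp_add)
    then show ?thesis unfolding w2_def by (simp add: cis_conv_exp algebra_simps)
  qed
  finally show ?thesis by (simp add: w1_def cis_conv_exp)
qed

lemma Am_bound: "\<bar>Am r t - t\<bar> < pi"
proof -
  define q where "q = r * sin t / (1 - r * cos t)"
  have "Am r t - t = 2 * arctan q" by (simp add: Am_def q_def)
  moreover have "- (pi/2) < arctan q" "arctan q < pi/2" using arctan_bounded[of q] by auto
  ultimately show ?thesis by linarith
qed

lemma Am_inv: assumes "\<bar>r\<bar> < 1" shows "Am (-r) (Am r t) = t"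
proof -
  define c where "c = cis t"
  define s where "s = Am r t"
  have nc: "norm c = 1" by (simp add: c_def)
  have d1: "1 - of_real r * c \<noteq> 0"
  proof
    assume "1 - of_real r * c = 0"
    then have "norm (of_real r * c) = 1" by (metis eq_iff_diff_eq_0 norm_one)
    then show False using assms nc by (simp add: norm_mult)
  qed
  have r2: "1 - (of_real r)^2 \<noteq> (0::complex)"
  proof
    assume "1 - (of_real r)^2 = (0::complex)"
    then have "1 - r^2 = 0" by (metis of_real_1 of_real_diff of_real_eq_0_iff of_real_power)
    then have "r^2 = 1" by simp
    then have "r = 1 \<or> r = -1" by (simp add: power2_eq_1_iff)
    then show False using assms by auto
  qed
  have cs: "cis s = (c - of_real r) / (1 - of_real r * c)" using cis_Am[OF assms] by (simp add: s_def c_def)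
  have a2: "\<bar>-r\<bar> < 1" using assms by simp
  have "cis (Am (-r) s) = (cis s + of_real r) / (1 + of_real r * cis s)" using cis_Am[OF a2, of s] by simp
  also have "\<dots> = c" unfolding cs by (rule mob_comp[OF d1 r2])
  finally have e: "cis (Am (-r) s) = cis t" by (simp add: c_def)
  define d where "d = Am (-r) s - t"
  have "cis d = 1" using e by (simp add: d_def flip: cis_divide)
  then have "cos d = 1" by (metis Re_complex_of_real cis.sel(1) of_real_1)
  then obtain k :: int where k: "d = of_int k * 2 * pi" using cos_one_2pi_int by blast
  have "\<bar>d\<bar> < 2 * pi" using Am_bound[of "-r" s] Am_bound[of r t] by (simp add: d_def s_def)
  then have "\<bar>real_of_int k\<bar> < 1" using k by (simp add: abs_mult)
  then have "k = 0" by linarith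
  then show ?thesis using k by (simp add: d_def s_def)
qed

lemma Am_periodic: "Am r (t + 2 * pi * of_int j) = Am r t + 2 * pi * of_int j"
  by (simp add: Am_def sin_add cos_add)

lemma Am_odd: "Am r (-t) = - Am r t"
  by (simp add: Am_def arctan_minus)

lemma Am_cont: assumes "\<bar>r\<bar> < 1" shows "continuous_on UNIV (Am r)"
  unfolding Am_def using rcos_lt[OF assms]
  by (intro continuous_intros) (auto simp: less_imp_neq)

lemma cont_inj_strict_mono:
  fixes f :: "real \<Rightarrow> real"
  assumes cont: "continuous_on UNIV f" and inj: "inj f" and ab: "a < b" "f a < f b"
  shows "strict_mono f"
proof (rule strict_monoI, rule ccontr)
  fix x y :: real assume xy: "x < y" "\<not> f x < f y"
  have "f x \<noteq> f y" using inj xy(1) by (metis injD less_irrefl)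
  then have fyx: "f y < f x" using xy(2) by linarith
  define h where "h s = f ((1 - s) * b + s * y) - f ((1 - s) * a + s * x)" for s
  have ic: "isCont f z" for z using cont by (simp add: continuous_on_eq_continuous_at)
  have "isCont h s" for s unfolding h_def
    by (intro continuous_intros continuous_at_compose[OF _ ic, unfolded o_def])
  then obtain s where s: "0 \<le> s" "s \<le> 1" "h s = 0"
    using IVT2[of h 1 0 0] fyx ab by (force simp: h_def)
  then have "f ((1 - s) * b + s * y) = f ((1 - s) * a + s * x)" by (simp add: h_def)
  then have "(1 - s) * b + s * y = (1 - s) * a + s * x" using inj by (simp add: inj_eq)
  moreover have "(1 - s) * a < (1 - s) * b \<or> s * x < s * y"
    using s ab xy by (cases "s = 1") (auto intro: mult_strict_left_mono)
  moreover have "(1 - s) * a \<le> (1 - s) * b" "s * x \<le> s * y"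
    using s ab xy by (auto intro: mult_left_mono)
  ultimately show False by linarith
qed

lemma Am_strict_mono: assumes "\<bar>r\<bar> < 1" shows "strict_mono (Am r)"
proof (rule cont_inj_strict_mono[OF Am_cont[OF assms]])
  show "inj (Am r)" by (rule inj_on_inverseI[where g = "Am (-r)"]) (simp add: Am_inv[OF assms])
  show "0 < pi" by simp
  show "Am r 0 < Am r pi" by (simp add: Am_def)
qed

lemma rpar_exists:
  assumes m: "1 \<le> m" and n: "1 \<le> n"
  shows "\<exists>r. 0 < r \<and> r < 1 \<and> pi - pi / (4 * real n) < Am r (pi / (4 * real m))"
proof -
  define th where "th = pi / (4 * real m)"
  define ps where "ps = th / 2"
  have th0: "0 < th" using m by (simp add: th_def)
  have th1: "th \<le> pi / 4" using m by (simp add: th_def field_simps)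
  have ps0: "0 < ps" "ps < pi/2" using th0 th1 by (simp_all add: ps_def)
  have sps: "0 < sin ps" using ps0 by (intro sin_gt_zero) auto
  have cps: "0 < cos ps" using ps0 by (intro cos_gt_zero) auto
  have sth: "sin th = 2 * sin ps * cos ps" using sin_double[of ps] by (simp add: ps_def)
  have cth: "1 - cos th = 2 * (sin ps)^2" using cos_double_sin[of ps] by (simp add: ps_def)
  have sth0: "0 < sin th" using sth sps cps by simp
  have cth0: "0 < cos th" using th0 th1 by (intro cos_gt_zero) auto
  define e where "e = pi / (4 * real n)"
  define ph where "ph = (pi - e - th) / 2"
  have pn: "e \<le> pi / 4" using n by (simp add: field_simps e_def)
  have "0 < pi - e - th" using th1 pn pi_gt_zero by linarith
  then have ph0: "0 < ph" unfolding ph_def by simp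
  have pn0: "0 < e" using n by (simp add: e_def)
  have ph1: "ph < pi/2 - ps" using pn0 by (simp add: ph_def ps_def)
  define T where "T = tan ph"
  define C where "C = cos ps / sin ps"
  have T0: "0 < T" using ph0 ph1 ps0 by (simp add: T_def tan_gt_zero)
  have tC: "tan (pi/2 - ps) = C" by (simp add: C_def tan_def sin_diff cos_diff)
  have TC: "T < C" unfolding T_def tC[symmetric] by (rule tan_monotone) (use ph0 ph1 ps0 in auto)
  define Q where "Q = (T + C) / 2"
  have QT: "T < Q" "Q < C" using TC by (simp_all add: Q_def)
  define D where "D = sin th + Q * cos th"
  have "0 < Q * cos th" using cth0 QT T0 by simp
  then have D0: "0 < D" using sth0 by (simp add: D_def)
  define r where "r = Q / D"
  have r0: "0 < r" using QT T0 D0 by (simp add: r_def)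
  have "Q * sin ps < cos ps" using QT sps by (simp add: C_def field_simps)
  then have "Q * (1 - cos th) < sin th" using sps unfolding cth sth
    by (simp add: power2_eq_square)
  then have "Q < D" by (simp add: D_def algebra_simps)
  then have r1: "r < 1" using D0 by (simp add: r_def)
  have "1 - r * cos th = sin th / D" using D0 by (simp add: r_def D_def field_simps)
  then have q: "r * sin th / (1 - r * cos th) = Q" using D0 sth0 by (simp add: r_def)
  have "arctan T = ph" unfolding T_def by (rule arctan_tan) (use ph0 ph1 ps0 in auto)
  then have "ph < arctan Q" using QT arctan_less_iff by metis
  then have "pi - e < Am r th" unfolding Am_def q by (simp add: ph_def)
  then show ?thesis using r0 r1 by (auto simp: th_def e_def)
qed

definition alpha :: "nat \<Rightarrow> nat \<Rightarrow> real \<Rightarrow> real \<Rightarrow> real" where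
  "alpha m n r x = real n / (2 * pi) * Am r (2 * pi * x / real m) + (1 - real n) / 2"
definition beta :: "nat \<Rightarrow> nat \<Rightarrow> real \<Rightarrow> real \<Rightarrow> real" where
  "beta m n r y = real m / (2 * pi) * Am (-r) (2 * pi * (y - (1 - real n) / 2) / real n)"

lemma alpha_beta: assumes "1 \<le> m" "1 \<le> n" "\<bar>r\<bar> < 1" shows "alpha m n r (beta m n r y) = y"
proof -
  define s where "s = 2 * pi * (y - (1 - real n) / 2) / real n"
  have a: "\<bar>-r\<bar> < 1" using assms by simp
  have "2 * pi * beta m n r y / real m = Am (-r) s" using assms by (simp add: beta_def s_def)
  then have "alpha m n r (beta m n r y) = real n / (2 * pi) * s + (1 - real n) / 2"
    using Am_inv[OF a, of s] by (simp add: alpha_def)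
  also have "\<dots> = y" using assms by (simp add: s_def)
  finally show ?thesis .
qed

lemma beta_alpha: assumes "1 \<le> m" "1 \<le> n" "\<bar>r\<bar> < 1" shows "beta m n r (alpha m n r x) = x"
proof -
  define s where "s = 2 * pi * x / real m"
  have "2 * pi * (alpha m n r x - (1 - real n) / 2) / real n = Am r s" using assms by (simp add: alpha_def s_def)
  then have "beta m n r (alpha m n r x) = real m / (2 * pi) * s"
    using Am_inv[OF assms(3), of s] by (simp add: beta_def)
  also have "\<dots> = x" using assms by (simp add: s_def)
  finally show ?thesis .
qed

lemma alpha_per: assumes "1 \<le> m"
  shows "alpha m n r (x + of_int j * real m) = alpha m n r x + of_int j * real n"
proof -
  have "2 * pi * (x + of_int j * real m) / real m = 2 * pi * x / real m + 2 * pi * of_int j"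
    using assms by (simp add: field_simps)
  then have "alpha m n r (x + of_int j * real m) = real n / (2 * pi) * (Am r (2 * pi * x / real m) + 2 * pi * of_int j) + (1 - real n) / 2"
    by (simp only: alpha_def Am_periodic)
  also have "\<dots> = alpha m n r x + of_int j * real n" by (simp add: alpha_def field_simps)
  finally show ?thesis .
qed

lemma alpha_mono: assumes "1 \<le> m" "1 \<le> n" "\<bar>r\<bar> < 1" shows "strict_mono (alpha m n r)"
proof (rule strict_monoI)
  fix x y :: real assume "x < y"
  then have "2 * pi * x / real m < 2 * pi * y / real m" using assms by (simp add: divide_strict_right_mono)
  then have "Am r (2 * pi * x / real m) < Am r (2 * pi * y / real m)"
    using Am_strict_mono[OF assms(3)] by (simp add: strict_mono_less)
  then have "real n / (2 * pi) * Am r (2 * pi * x / real m) < real n / (2 * pi) * Am r (2 * pi * y / real m)"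
    using assms by (intro mult_strict_left_mono) auto
  then show "alpha m n r x < alpha m n r y" by (simp add: alpha_def)
qed

lemma beta_mono: assumes "1 \<le> m" "1 \<le> n" "\<bar>r\<bar> < 1" shows "strict_mono (beta m n r)"
proof (rule strict_monoI)
  fix x y :: real assume "x < y"
  then have "2 * pi * (x - (1 - real n) / 2) / real n < 2 * pi * (y - (1 - real n) / 2) / real n"
    using assms by (simp add: divide_strict_right_mono)
  moreover have "\<bar>-r\<bar> < 1" using assms by simp
  ultimately have "Am (-r) (2 * pi * (x - (1 - real n) / 2) / real n) < Am (-r) (2 * pi * (y - (1 - real n) / 2) / real n)"
    using Am_strict_mono by (simp add: strict_mono_less)
  then have "real m / (2 * pi) * Am (-r) (2 * pi * (x - (1 - real n) / 2) / real n) < real m / (2 * pi) * Am (-r) (2 * pi * (y - (1 - real n) / 2) / real n)"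
    using assms by (intro mult_strict_left_mono) auto
  then show "beta m n r x < beta m n r y" by (simp add: beta_def)
qed

lemma alpha_P1:
  assumes m: "1 \<le> m" and n: "1 \<le> n" and r: "0 < r" "r < 1" and rA: "pi - pi / (4 * real n) < Am r (pi / (4 * real m))"
  shows "\<not> inXm m x \<Longrightarrow> inXp n (alpha m n r x)"
proof -
  assume nx: "\<not> inXm m x"
  have ar: "\<bar>r\<bar> < 1" using r by simp
  define a where "a = alpha m n r (1/8)"
  have "2 * pi * (1/8) / real m = pi / (4 * real m)" by simp
  define K where "K = real n / (2 * pi) * Am r (pi / (4 * real m))"
  define M where "M = real n / (2 * pi) * (pi - pi / (4 * real n))"
  have "a = K + (1 - real n) / 2" unfolding K_def a_def alpha_def using \<open>2 * pi * (1/8) / real m = pi / (4 * real m)\<close> by simp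
  moreover have "M < K" unfolding M_def K_def
    using rA n by (intro mult_strict_left_mono) auto
  moreover have "M = real n / 2 - 1/8" using n by (simp add: M_def field_simps)
  ultimately have a38: "3/8 < a" by (simp add: field_simps)
  have per1: "Am r (- q + 2 * pi) = 2 * pi - Am r q" for q
    using Am_periodic[of r "-q" 1] Am_odd[of r q] by simp
  have "2 * pi * (real m - 1/8) / real m = - (pi / (4 * real m)) + 2 * pi" using m by (simp add: field_simps)
  then have "Am r (2 * pi * (real m - 1/8) / real m) = 2 * pi - Am r (pi / (4 * real m))"
    using per1 by simp
  then have l1: "alpha m n r (real m - 1/8) = real n / (2 * pi) * (2 * pi - Am r (pi / (4 * real m))) + (1 - real n) / 2"
    unfolding alpha_def by simp
  have l2: "a = real n / (2 * pi) * Am r (pi / (4 * real m)) + (1 - real n) / 2"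
    unfolding a_def alpha_def using \<open>2 * pi * (1/8) / real m = pi / (4 * real m)\<close> by simp
  have a58: "alpha m n r (real m - 1/8) = 1 - a"
    unfolding l1 l2 by (simp add: field_simps)
  define j where "j = \<lfloor>x / real m\<rfloor>"
  define t where "t = x - of_int j * real m"
  have "of_int j \<le> x / real m" "x / real m < of_int j + 1" unfolding j_def by linarith+
  then have t0: "0 \<le> t" and tm: "t < real m" using m by (simp_all add: t_def field_simps)
  have "\<not> \<bar>x - of_int j * real m\<bar> < 1/8" using nx by (auto simp: inXm_def)
  then have t1: "1/8 \<le> t" using t0 by (simp add: t_def)
  have "\<not> \<bar>x - of_int (j + 1) * real m\<bar> < 1/8" using nx unfolding inXm_def by blast
  then have t2: "t \<le> real m - 1/8" using tm by (simp add: t_def algebra_simps)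
  have mono: "strict_mono (alpha m n r)" by (rule alpha_mono[OF m n ar])
  have "a \<le> alpha m n r t" using t1 mono unfolding a_def by (simp add: strict_mono_less_eq)
  moreover have "alpha m n r t \<le> 1 - a" using t2 mono a58 by (metis strict_mono_less_eq)
  ultimately have "\<bar>alpha m n r t - 1/2\<bar> < 1/8" using a38 by linarith
  moreover have "alpha m n r x = alpha m n r t + of_int j * real n"
    using alpha_per[OF m, where n=n and r=r and x=t and j=j] by (simp add: t_def)
  ultimately have "\<bar>alpha m n r x - 1/2 - of_int j * real n\<bar> < 1/8" by simp
  then show ?thesis unfolding inXp_def by blast
qed

definition DiffS :: "(real \<Rightarrow> real) set" where
  "DiffS = {f. bij f \<and> strict_mono f \<and> ext_holo f \<and> ext_holo (Hilbert_Choice.inv f)}"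

lemma DiffS_carrier: "DiffS \<subseteq> carrier Diff_omega_plus_R"
  by (auto simp: DiffS_def Diff_omega_plus_R_def ext_holo_analytic)

lemma DiffS_comp: assumes "f \<in> DiffS" "g \<in> DiffS" shows "f \<circ> g \<in> DiffS"
  using assms by (auto simp: DiffS_def bij_comp strict_mono_o ext_holo_comp o_inv_distrib)

lemma ext_holo_id: "ext_holo id"
proof -
  have "id = (\<lambda>x::real. 1 * x + 0)" by auto
  then show ?thesis using ext_holo_affine by metis
qed

lemma DiffS_id: "id \<in> DiffS"
  by (auto simp: DiffS_def ext_holo_id strict_mono_def)

lemma DiffS_pair: assumes "f \<circ> g = id" "g \<circ> f = id" "strict_mono f" "ext_holo f" "ext_holo g"
  shows "f \<in> DiffS"
proof -
  have "bij f" by (rule o_bij[OF assms(2) assms(1)])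
  moreover have "Hilbert_Choice.inv f = g" using assms(1,2) by (rule inv_unique_comp)
  ultimately show ?thesis using assms by (simp add: DiffS_def)
qed

lemma rho_DS: "(\<And>l. g l \<in> DiffS) \<Longrightarrow> rho g w \<in> DiffS"
  by (induction w) (auto simp: DiffS_id DiffS_comp)

lemma rho_repB: "rho (gR fa fa') (replicate k lB) = (\<lambda>x. x + real k)"
  by (induction k) (auto simp: lB_def)

lemma rho_repB': "rho (gR fa fa') (replicate k lB') = (\<lambda>x. x - real k)"
  by (induction k) (auto simp: lB'_def)

lemma ext_holo_alpha: assumes "1 \<le> m" "\<bar>r\<bar> < 1" shows "ext_holo (alpha m n r)"
proof -
  have "alpha m n r = (\<lambda>x. (real n / (2 * pi)) * x + (1 - real n) / 2) \<circ> Am r \<circ> (\<lambda>x. (2 * pi / real m) * x + 0)"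
    by (rule ext) (simp add: alpha_def)
  then show ?thesis using ext_holo_comp ext_holo_affine ext_holo_Am[OF assms(2)] by metis
qed

lemma ext_holo_beta: assumes "1 \<le> n" "\<bar>r\<bar> < 1" shows "ext_holo (beta m n r)"
proof -
  have e: "2 * pi * (y - (1 - real n) / 2) / real n = (2 * pi / real n) * y + (- (2 * pi / real n) * ((1 - real n) / 2))" for y
    using assms by (simp add: field_simps)
  have "beta m n r = (\<lambda>x. (real m / (2 * pi)) * x + 0) \<circ> Am (-r) \<circ> (\<lambda>x. (2 * pi / real n) * x + (- (2 * pi / real n) * ((1 - real n) / 2)))"
    by (simp add: fun_eq_iff beta_def e)
  moreover have "\<bar>-r\<bar> < 1" using assms by simp
  ultimately show ?thesis using ext_holo_comp ext_holo_affine ext_holo_Am by metis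
qed

lemma faithful_rep_R:
  assumes m: "1 \<le> m" and mn: "m < n"
  shows "\<exists>fa fa'. (\<forall>l. gR fa fa' l \<in> DiffS) \<and> (\<forall>l. gR fa fa' l \<circ> gR fa fa' (bs_inv_letter l) = id)
     \<and> rho (gR fa fa') (bs_relator m n) = id \<and> (\<forall>w. rho (gR fa fa') w = id \<longrightarrow> bs_equiv m n w [])"
proof -
  have n: "1 \<le> n" using m mn by simp
  obtain r where r: "0 < r" "r < 1" "pi - pi / (4 * real n) < Am r (pi / (4 * real m))"
    using rpar_exists[OF m n] by blast
  have ar: "\<bar>r\<bar> < 1" using r by simp
  define fa where "fa = alpha m n r"
  define fa' where "fa' = beta m n r"
  have ab: "fa \<circ> fa' = id" using alpha_beta[OF m n ar] by (auto simp: fa_def fa'_def)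
  have ba: "fa' \<circ> fa = id" using beta_alpha[OF m n ar] by (auto simp: fa_def fa'_def)
  have t1: "(\<lambda>x::real. x + 1) \<circ> (\<lambda>x. x - 1) = id" "(\<lambda>x::real. x - 1) \<circ> (\<lambda>x. x + 1) = id" by auto
  have eh1: "ext_holo (\<lambda>x. x + 1)" using ext_holo_affine[of 1 1] by simp
  have eh2: "ext_holo (\<lambda>x. x - 1)" using ext_holo_affine[of 1 "-1"] by simp
  have sm1: "strict_mono (\<lambda>x::real. x + 1)" "strict_mono (\<lambda>x::real. x - 1)" by (auto simp: strict_mono_def)
  have gDS: "gR fa fa' l \<in> DiffS" for l
  proof -
    obtain s t where l: "l = (s, t)" by (cases l)
    show ?thesis
    proof (cases t)
      case GenA
      then show ?thesis using l DiffS_pair[OF ab ba] DiffS_pair[OF ba ab] alpha_mono[OF m n ar] beta_mono[OF m n ar]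
        ext_holo_alpha[OF m ar] ext_holo_beta[OF n ar] by (auto simp: fa_def fa'_def)
    next
      case GenB
      then show ?thesis using l DiffS_pair[OF t1(1) t1(2)] DiffS_pair[OF t1(2) t1(1)] sm1 eh1 eh2 by auto
    qed
  qed
  have ginv: "gR fa fa' l \<circ> gR fa fa' (bs_inv_letter l) = id" for l
  proof -
    obtain s t where l: "l = (s, t)" by (cases l)
    show ?thesis using ab ba t1 by (cases t; cases s) (auto simp: l bs_inv_letter_def)
  qed
  have per: "fa (y + real m) = fa y + real n" for y
    using alpha_per[OF m, where n=n and r=r and x=y and j=1] by (simp add: fa_def)
  have rel: "rho (gR fa fa') (bs_relator m n) = id"
  proof
    fix x
    have "bs_relator m n = [lA] @ replicate m lB @ [lA'] @ replicate n lB'"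
      by (simp add: bs_relator_def lA_def lA'_def lB_def lB'_def)
    then have "rho (gR fa fa') (bs_relator m n) x = fa (fa' (x - real n) + real m)"
      by (simp add: rho_repB rho_repB' lA_def lA'_def)
    also have "\<dots> = x" using per ab by (simp add: pointfree_idE)
    finally show "rho (gR fa fa') (bs_relator m n) x = id x" by simp
  qed
  have P1: "\<not> inXm m x \<Longrightarrow> inXp n (fa x)" for x
    using alpha_P1[OF m n r] by (simp add: fa_def)
  have P2: "\<not> inXp n y \<Longrightarrow> inXm m (fa' y)" for y
  proof (rule ccontr)
    assume "\<not> inXp n y" "\<not> inXm m (fa' y)"
    then have "inXp n (fa (fa' y))" using P1 by blast
    then show False using \<open>\<not> inXp n y\<close> ab by (simp add: pointfree_idE)
  qed
  have "\<forall>w. rho (gR fa fa') w = id \<longrightarrow> bs_equiv m n w []"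
    using faithful_R[OF m mn P1 P2 ginv rel] by blast
  then show ?thesis using gDS ginv rel by blast
qed

theorem diff_part:
  assumes m: "1 \<le> m" and mn: "m < n"
  shows "contains_copy_of Diff_omega_plus_R (BS m n)"
proof -
  obtain fa fa' where F: "\<forall>l. gR fa fa' l \<in> DiffS" "\<forall>l. gR fa fa' l \<circ> gR fa fa' (bs_inv_letter l) = id"
     "rho (gR fa fa') (bs_relator m n) = id" "\<forall>w. rho (gR fa fa') w = id \<longrightarrow> bs_equiv m n w []"
    using faithful_rep_R[OF m mn] by blast
  show ?thesis
  proof (rule embed)
    show "\<And>f h. mult Diff_omega_plus_R f h = f \<circ> h" by (simp add: Diff_omega_plus_R_def)
    show "one Diff_omega_plus_R = id" by (simp add: Diff_omega_plus_R_def)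
    show "\<And>w. rho (gR fa fa') w \<in> carrier Diff_omega_plus_R" using rho_DS F(1) DiffS_carrier by blast
  qed (use F in auto)
qed

definition phi :: "real \<Rightarrow> real" where "phi x = 1/2 + x / (2 * (1 + \<bar>x\<bar>))"
definition psi :: "real \<Rightarrow> real" where "psi t = (2 * t - 1) / (1 - \<bar>2 * t - 1\<bar>)"

lemma q_bound: "-1 < x / (1 + \<bar>x\<bar>) \<and> x / (1 + \<bar>x\<bar>) < (1::real)"
proof (cases "0 \<le> x")
  case True
  then have "x / (1 + \<bar>x\<bar>) = x / (1 + x)" by simp
  moreover have "0 \<le> x / (1 + x)" "x / (1 + x) < 1" using True by simp_all
  ultimately show ?thesis by linarith
next
  case False
  then have "x / (1 + \<bar>x\<bar>) = x / (1 - x)" by simp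
  moreover have "x / (1 - x) \<le> 0" using False by (simp add: divide_nonpos_pos)
  moreover have "-1 < x / (1 - x)" using False by (simp add: less_divide_eq)
  ultimately show ?thesis by linarith
qed

lemma phi_range: "0 < phi x \<and> phi x < 1"
proof -
  define q where "q = x / (1 + \<bar>x\<bar>)"
  have "phi x = 1/2 + q / 2" unfolding phi_def q_def by simp
  then show ?thesis using q_bound[of x] unfolding q_def[symmetric] by linarith
qed

lemma psi_phi[simp]: "psi (phi x) = x"
proof (cases "0 \<le> x")
  case True
  have q1: "2 * phi x - 1 = x / (1 + x)" using True by (simp add: phi_def field_simps)
  have q2: "\<bar>x / (1 + x)\<bar> = x / (1 + x)" using True by simp
  have "x / (1 + x) / (1 - x / (1 + x)) = x" using True by (simp add: field_simps)
  then show ?thesis unfolding psi_def q1 q2 .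
next
  case False
  have q1: "2 * phi x - 1 = x / (1 - x)" using False by (simp add: phi_def field_simps)
  have q2: "\<bar>x / (1 - x)\<bar> = - (x / (1 - x))" using False by (simp add: divide_neg_pos)
  have "x / (1 - x) / (1 - - (x / (1 - x))) = x" using False by (simp add: field_simps)
  then show ?thesis unfolding psi_def q1 q2 .
qed

lemma phi_psi: assumes "0 < t" "t < 1" shows "phi (psi t) = t"
proof (cases "0 \<le> 2 * t - 1")
  case True
  have p1: "psi t = (2 * t - 1) / (2 - 2 * t)" using True by (simp add: psi_def)
  have p2: "\<bar>(2 * t - 1) / (2 - 2 * t)\<bar> = (2 * t - 1) / (2 - 2 * t)" using True assms by simp
  have "1/2 + (2 * t - 1) / (2 - 2 * t) / (2 * (1 + (2 * t - 1) / (2 - 2 * t))) = t"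
    using assms by (simp add: field_simps)
  then show ?thesis unfolding phi_def p1 p2 .
next
  case False
  have p1: "psi t = (2 * t - 1) / (2 * t)" using False by (simp add: psi_def)
  have p2: "\<bar>(2 * t - 1) / (2 * t)\<bar> = - ((2 * t - 1) / (2 * t))" using False assms by (intro abs_of_neg divide_neg_pos) auto
  have "1/2 + (2 * t - 1) / (2 * t) / (2 * (1 + - ((2 * t - 1) / (2 * t)))) = t"
    using assms by (simp add: field_simps)
  then show ?thesis unfolding phi_def p1 p2 .
qed

lemma phi_strict_mono: "strict_mono phi"
proof (rule strict_monoI)
  fix x y :: real assume xy: "x < y"
  have dx: "0 < 1 + \<bar>x\<bar>" and dy: "0 < 1 + \<bar>y\<bar>" by simp_all
  have "x * (1 + \<bar>y\<bar>) < y * (1 + \<bar>x\<bar>)"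
  proof (cases "0 \<le> x")
    case True then show ?thesis using xy by (simp add: algebra_simps)
  next
    case False
    show ?thesis
    proof (cases "0 \<le> y")
      case True
      have "x * (1 + \<bar>y\<bar>) < 0" using False dy by (simp add: mult_neg_pos)
      moreover have "0 \<le> y * (1 + \<bar>x\<bar>)" using True dx by simp
      ultimately show ?thesis by linarith
    next
      case False2: False
      then show ?thesis using xy False by (simp add: algebra_simps)
    qed
  qed
  then have "x / (1 + \<bar>x\<bar>) < y / (1 + \<bar>y\<bar>)" using dx dy by (simp add: divide_simps)
  moreover define qx qy where "qx = x / (1 + \<bar>x\<bar>)" and "qy = y / (1 + \<bar>y\<bar>)"
  moreover have "phi x = 1/2 + qx / 2" "phi y = 1/2 + qy / 2"
    by (simp_all add: phi_def qx_def qy_def)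
  ultimately show "phi x < phi y" by linarith
qed

definition conjI :: "(real \<Rightarrow> real) \<Rightarrow> real \<Rightarrow> real" where
  "conjI g t = (if 0 < t \<and> t < 1 then phi (g (psi t)) else t)"

lemma conjI_in: "0 < t \<Longrightarrow> t < 1 \<Longrightarrow> 0 < conjI g t \<and> conjI g t < 1"
  using phi_range by (simp add: conjI_def)

lemma conjI_comp: "conjI (g \<circ> h) = conjI g \<circ> conjI h"
proof
  fix t
  show "conjI (g \<circ> h) t = (conjI g \<circ> conjI h) t"
  proof (cases "0 < t \<and> t < 1")
    case True
    then have "0 < conjI h t \<and> conjI h t < 1" using conjI_in by blast
    then show ?thesis using True by (simp add: conjI_def)
  next
    case False
    have c: "conjI k t = t" for k using False unfolding conjI_def by auto
    show ?thesis by (simp add: c)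
  qed
qed

lemma conjI_id: "conjI id = id"
  by (auto simp: conjI_def phi_psi fun_eq_iff)

lemma conjI_faith: assumes "conjI g = id" shows "g = id"
proof
  fix x
  have "conjI g (phi x) = phi x" using assms by simp
  then have "phi (g x) = phi x" using phi_range[of x] by (simp add: conjI_def)
  then show "g x = id x" using strict_mono_eq[OF phi_strict_mono] by simp
qed

lemma conjI_mono: assumes "strict_mono g" shows "strict_mono (conjI g)"
proof (rule strict_monoI)
  fix s t :: real assume st: "s < t"
  show "conjI g s < conjI g t"
  proof (cases "0 < s \<and> s < 1")
    case s: True
    show ?thesis
    proof (cases "0 < t \<and> t < 1")
      case t: True
      have "psi s < psi t"
      proof (rule ccontr)
        assume "\<not> psi s < psi t"
        then have "phi (psi t) \<le> phi (psi s)" using strict_mono_less_eq[OF phi_strict_mono] by simp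
        then show False using phi_psi s t st by simp
      qed
      then have "g (psi s) < g (psi t)" using assms by (simp add: strict_mono_less)
      then show ?thesis using s t strict_mono_less[OF phi_strict_mono] by (simp add: conjI_def)
    next
      case False
      then have "conjI g t = t" "1 \<le> t" using s st unfolding conjI_def by auto
      moreover have "conjI g s = phi (g (psi s))" using s unfolding conjI_def by auto
      ultimately show ?thesis using phi_range[of "g (psi s)"] by linarith
    qed
  next
    case s: False
    show ?thesis
    proof (cases "0 < t \<and> t < 1")
      case t: True
      then have "conjI g s = s" "s \<le> 0" using s st unfolding conjI_def by auto
      moreover have "conjI g t = phi (g (psi t))" using t unfolding conjI_def by auto
      ultimately show ?thesis using phi_range[of "g (psi t)"] by linarith
    next
      case False
      then have "conjI g t = t" "conjI g s = s" using s unfolding conjI_def by auto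
      then show ?thesis using st by simp
    qed
  qed
qed

lemma conjI_cont: assumes "strict_mono g" "g \<circ> g' = id" shows "continuous_on UNIV (conjI g)"
proof (rule continuous_onI_mono)
  have "conjI g \<circ> conjI g' = id" using assms(2) by (simp add: conjI_comp[symmetric] conjI_id)
  then have "surj (conjI g)" by (metis comp_apply id_apply surjI)
  then show "open (conjI g ` UNIV)" by simp
  show "\<And>x y. x \<in> UNIV \<Longrightarrow> y \<in> UNIV \<Longrightarrow> x \<le> y \<Longrightarrow> conjI g x \<le> conjI g y"
    using conjI_mono[OF assms(1)] by (simp add: strict_mono_less_eq)
qed

lemma inv_strict_mono: fixes g g' :: "real \<Rightarrow> real" assumes "strict_mono g" "g \<circ> g' = id" shows "strict_mono g'"
proof (rule strict_monoI, rule ccontr)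
  fix x y :: real assume "x < y" "\<not> g' x < g' y"
  then have "g (g' y) \<le> g (g' x)" using assms(1) by (simp add: strict_mono_less_eq)
  then show False using \<open>x < y\<close> assms(2) by (simp add: pointfree_idE)
qed

lemma conjI_homeo:
  assumes "strict_mono g" "strict_mono g'" "g \<circ> g' = id" "g' \<circ> g = id"
  shows "conjI g \<in> carrier Homeo_plus_I"
proof -
  have c1: "conjI g \<circ> conjI g' = id" using assms(3) by (simp add: conjI_comp[symmetric] conjI_id)
  have c2: "conjI g' \<circ> conjI g = id" using assms(4) by (simp add: conjI_comp[symmetric] conjI_id)
  have into: "conjI h x \<in> {0..1}" if "x \<in> {0..1}" for h x
    using that conjI_in[of x h] by (cases "0 < x \<and> x < 1") (auto simp: conjI_def)
  have im1: "conjI g ` {0..1} = {0..1}"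
  proof
    show "conjI g ` {0..1} \<subseteq> {0..1}" using into by auto
    show "{0..1} \<subseteq> conjI g ` {0..1}"
    proof
      fix y :: real assume "y \<in> {0..1}"
      then have "conjI g' y \<in> {0..1}" "conjI g (conjI g' y) = y" using into c1 by (auto simp: pointfree_idE)
      then show "y \<in> conjI g ` {0..1}" by (metis image_eqI)
    qed
  qed
  have im2: "conjI g' ` {0..1} = {0..1}"
  proof
    show "conjI g' ` {0..1} \<subseteq> {0..1}" using into by auto
    show "{0..1} \<subseteq> conjI g' ` {0..1}"
    proof
      fix y :: real assume "y \<in> {0..1}"
      then have "conjI g y \<in> {0..1}" "conjI g' (conjI g y) = y" using into c2 by (auto simp: pointfree_idE)
      then show "y \<in> conjI g' ` {0..1}" by (metis image_eqI)
    qed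
  qed
  have "homeomorphism {0..1} {0..1} (conjI g) (conjI g')"
    unfolding homeomorphism_def
    using im1 im2 c1 c2 continuous_on_subset[OF conjI_cont[OF assms(1,3)]] continuous_on_subset[OF conjI_cont[OF assms(2,4)]]
    by (auto simp: pointfree_idE)
  moreover have "strict_mono_on {0..1} (conjI g)"
    using conjI_mono[OF assms(1)] by (simp add: strict_mono_on_def strict_mono_def)
  moreover have "\<forall>x. x \<notin> {0..1} \<longrightarrow> conjI g x = x" by (auto simp: conjI_def)
  ultimately show ?thesis by (auto simp: Homeo_plus_I_def)
qed

lemma DiffS_inv: assumes "f \<in> DiffS"
  shows "strict_mono f" "f \<circ> Hilbert_Choice.inv f = id" "Hilbert_Choice.inv f \<circ> f = id" "strict_mono (Hilbert_Choice.inv f)"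
proof -
  have b: "bij f" using assms by (simp add: DiffS_def)
  show "strict_mono f" using assms by (simp add: DiffS_def)
  show fi: "f \<circ> Hilbert_Choice.inv f = id" using b by (metis bij_is_surj surj_iff)
  show "Hilbert_Choice.inv f \<circ> f = id" using b by (metis bij_is_inj inj_iff)
  show "strict_mono (Hilbert_Choice.inv f)" using inv_strict_mono[OF _ fi] assms by (simp add: DiffS_def)
qed

lemma rho_conjI: "rho (\<lambda>l. conjI (g l)) w = conjI (rho g w)"
proof (induction w)
  case Nil show ?case by (simp only: rho_Nil conjI_id)
next
  case (Cons x w) show ?case by (simp only: rho_Cons Cons.IH conjI_comp)
qed

theorem homeoI_part:
  assumes m: "1 \<le> m" and mn: "m < n"
  shows "contains_copy_of Homeo_plus_I (BS m n)"
proof -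
  obtain fa fa' where F: "\<forall>l. gR fa fa' l \<in> DiffS" "\<forall>l. gR fa fa' l \<circ> gR fa fa' (bs_inv_letter l) = id"
     "rho (gR fa fa') (bs_relator m n) = id" "\<forall>w. rho (gR fa fa') w = id \<longrightarrow> bs_equiv m n w []"
    using faithful_rep_R[OF m mn] by blast
  define g where "g = gR fa fa'"
  show ?thesis
  proof (rule embed[where g = "\<lambda>l. conjI (g l)"])
    show "\<And>f h. mult Homeo_plus_I f h = f \<circ> h" by (simp add: Homeo_plus_I_def)
    show "one Homeo_plus_I = id" by (simp add: Homeo_plus_I_def)
    show "rho (\<lambda>l. conjI (g l)) w \<in> carrier Homeo_plus_I" for w
    proof -
      have "rho g w \<in> DiffS" using rho_DS F(1) g_def by blast
      then show ?thesis unfolding rho_conjI using conjI_homeo DiffS_inv by blast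
    qed
    show "conjI (g l) \<circ> conjI (g (bs_inv_letter l)) = id" for l
    proof -
      have "g l \<circ> g (bs_inv_letter l) = id" using F(2) g_def by blast
      then show ?thesis by (simp only: conjI_comp[symmetric] conjI_id)
    qed
    show "rho (\<lambda>l. conjI (g l)) (bs_relator m n) = id"
      unfolding rho_conjI using F(3) by (simp add: g_def conjI_id)
    show "bs_equiv m n w []" if "rho (\<lambda>l. conjI (g l)) w = id" for w
      using that F(4) conjI_faith unfolding rho_conjI g_def by blast
  qed
qed

definition liftF :: "(real \<Rightarrow> real) \<Rightarrow> real \<Rightarrow> real" where
  "liftF u t = of_int \<lfloor>t\<rfloor> + u (frac t)"

definition circ :: "(real \<Rightarrow> real) \<Rightarrow> complex \<Rightarrow> complex" where
  "circ u z = (if z \<in> circle then cis (2 * pi * u (Arg2pi z / (2 * pi))) else z)"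

definition good :: "(real \<Rightarrow> real) \<Rightarrow> bool" where
  "good u \<longleftrightarrow> strict_mono u \<and> u 0 = 0 \<and> u 1 = 1 \<and> continuous_on UNIV u"

lemma cis_in_circle[simp]: "cis t \<in> circle" by (simp add: circle_def)

lemma Arg2pi_cis01: assumes "0 \<le> t" "t < 1" shows "Arg2pi (cis (2 * pi * t)) = 2 * pi * t"
  by (rule Arg2pi_unique[of 1]) (use assms in \<open>auto simp: cis_conv_exp\<close>)

lemma circle_cis: assumes "z \<in> circle" shows "cis (Arg2pi z) = z"
proof -
  have "is_Arg z (Arg2pi z)" using Arg2pi by blast
  then have "z = of_real (norm z) * exp (\<i> * of_real (Arg2pi z))" by (simp add: is_Arg_def)
  then show ?thesis using assms by (simp add: circle_def cis_conv_exp)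
qed

lemma Arg2pi_range: "0 \<le> Arg2pi z / (2 * pi) \<and> Arg2pi z / (2 * pi) < 1"
  using Arg2pi[of z] by auto

lemma cis_int: "cis (x + 2 * pi * of_int k) = cis x"
proof -
  have "cis (2 * pi * of_int k) = 1" by (simp add: complex_eq_iff)
  then show ?thesis by (simp flip: cis_mult)
qed

lemma cis_frac: "cis (2 * pi * t) = cis (2 * pi * frac t)"
proof -
  have "2 * pi * t = 2 * pi * frac t + 2 * pi * of_int \<lfloor>t\<rfloor>" by (simp add: frac_def algebra_simps)
  then show ?thesis using cis_int by simp
qed

lemma circ_cis: "circ u (cis (2 * pi * t)) = cis (2 * pi * liftF u t)"
proof -
  have "Arg2pi (cis (2 * pi * t)) = 2 * pi * frac t"
    unfolding cis_frac[of t] by (rule Arg2pi_cis01) (auto simp: frac_lt_1)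
  then have "circ u (cis (2 * pi * t)) = cis (2 * pi * u (frac t))" by (simp add: circ_def)
  also have "\<dots> = cis (2 * pi * u (frac t) + 2 * pi * of_int \<lfloor>t\<rfloor>)" by (rule cis_int[symmetric])
  finally show ?thesis by (simp add: liftF_def algebra_simps)
qed

definition maps01 :: "(real \<Rightarrow> real) \<Rightarrow> bool" where
  "maps01 v \<longleftrightarrow> (\<forall>t. 0 \<le> t \<and> t < 1 \<longrightarrow> 0 \<le> v t \<and> v t < 1)"

lemma circ_comp: assumes "maps01 v" shows "circ (u \<circ> v) = circ u \<circ> circ v"
proof
  fix z
  show "circ (u \<circ> v) z = (circ u \<circ> circ v) z"
  proof (cases "z \<in> circle")
    case True
    define s where "s = Arg2pi z / (2 * pi)"
    have s: "0 \<le> v s" "v s < 1" using assms Arg2pi_range[of z] by (auto simp: maps01_def s_def)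
    have "circ v z = cis (2 * pi * v s)" using True by (simp add: circ_def s_def)
    moreover have "Arg2pi (cis (2 * pi * v s)) / (2 * pi) = v s" using Arg2pi_cis01[OF s] by simp
    ultimately show ?thesis using True by (simp add: circ_def s_def)
  next
    case False then show ?thesis by (simp add: circ_def)
  qed
qed

lemma circ_id: "circ id = id"
proof
  fix z
  show "circ id z = id z"
    using circle_cis[of z] by (simp add: circ_def)
qed

lemma circ_faith: assumes "circ u = id" "maps01 u" "0 \<le> t" "t < 1" shows "u t = t"
proof -
  have "circ u (cis (2 * pi * t)) = cis (2 * pi * t)" using assms(1) by simp
  moreover have "circ u (cis (2 * pi * t)) = cis (2 * pi * u t)"
    using Arg2pi_cis01[OF assms(3,4)] by (simp add: circ_def)
  ultimately have "cis (2 * pi * u t) = cis (2 * pi * t)" by simp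
  then have "Arg2pi (cis (2 * pi * u t)) = Arg2pi (cis (2 * pi * t))" by simp
  then show ?thesis using Arg2pi_cis01[OF assms(3,4)] Arg2pi_cis01[of "u t"] assms(2,3,4) by (simp add: maps01_def)
qed

lemma good_maps01: assumes "good u" shows "maps01 u"
  unfolding maps01_def
proof (intro allI impI)
  fix t :: real assume "0 \<le> t \<and> t < 1"
  then show "0 \<le> u t \<and> u t < 1"
    using assms unfolding good_def by (metis strict_mono_less strict_mono_less_eq)
qed

lemma liftF_shift: "liftF u (t + 1) = liftF u t + 1"
  by (simp add: liftF_def frac_1_eq)

lemma liftF_mono: assumes "good u" shows "strict_mono (liftF u)"
proof (rule strict_monoI)
  fix t s :: real assume ts: "t < s"
  have sm: "strict_mono u" and u0: "u 0 = 0" and u1: "u 1 = 1" using assms by (auto simp: good_def)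
  have ft: "0 \<le> frac t" "frac t < 1" and fs: "0 \<le> frac s" "frac s < 1" by (auto simp: frac_lt_1)
  have fl: "\<lfloor>t\<rfloor> \<le> \<lfloor>s\<rfloor>" using ts by (simp add: floor_mono)
  show "liftF u t < liftF u s"
  proof (cases "\<lfloor>t\<rfloor> = \<lfloor>s\<rfloor>")
    case True
    then have "frac t < frac s" using ts by (simp add: frac_def)
    then have "u (frac t) < u (frac s)" using sm by (simp add: strict_mono_less)
    then show ?thesis using True by (simp add: liftF_def)
  next
    case False
    then have "of_int \<lfloor>t\<rfloor> + 1 \<le> (of_int \<lfloor>s\<rfloor> :: real)" using fl by simp
    moreover have "u (frac t) < 1" using ft sm u1 by (metis strict_mono_less)
    moreover have "0 \<le> u (frac s)" using fs sm u0 by (metis strict_mono_less_eq)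
    ultimately show ?thesis by (simp add: liftF_def)
  qed
qed

lemma liftF_cont: assumes "good u" shows "continuous_on UNIV (liftF u)"
proof -
  have cu: "continuous_on UNIV u" and u0: "u 0 = 0" and u1: "u 1 = 1" using assms by (auto simp: good_def)
  have "isCont (liftF u) t0" for t0
  proof -
    define k where "k = \<lfloor>t0\<rfloor>"
    define H where "H t = (if t \<le> of_int k then of_int k - 1 + u (t - of_int k + 1) else of_int k + u (t - of_int k))" for t
    have "continuous_on UNIV H" unfolding H_def
      by (rule continuous_on_cases_le[where h = "\<lambda>t. t", simplified])
         (auto intro!: continuous_intros continuous_on_compose2[OF cu] simp: u0 u1)
    then have cH: "continuous_on {of_int k - 1 <..< of_int k + 1} H" by (rule continuous_on_subset) auto
    have eq: "liftF u t = H t" if "t \<in> {of_int k - 1 <..< of_int k + 1}" for t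
    proof -
      consider "t < of_int k" | "t = of_int k" | "of_int k < t" by linarith
      then show ?thesis
      proof cases
        case 1
        then have "\<lfloor>t\<rfloor> = k - 1" using that by (simp add: floor_eq_iff)
        then have ft: "real_of_int \<lfloor>t\<rfloor> = real_of_int k - 1" by simp
        have "liftF u t = real_of_int k - 1 + u (t - (real_of_int k - 1))"
          unfolding liftF_def frac_def ft ..
        also have "\<dots> = H t" using 1 by (simp add: H_def algebra_simps)
        finally show ?thesis .
      next
        case 2
        then show ?thesis by (simp add: liftF_def H_def u0 u1)
      next
        case 3
        then have "\<lfloor>t\<rfloor> = k" using that by (simp add: floor_eq_iff)
        then show ?thesis using 3 by (simp add: liftF_def H_def frac_def)
      qed
    qed
    have "continuous_on {of_int k - 1 <..< of_int k + 1} (liftF u)"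
      using continuous_on_eq[OF cH] eq by metis
    moreover have "t0 \<in> {of_int k - 1 <..< of_int k + 1}"
      unfolding k_def by (simp add: floor_le_iff) linarith
    ultimately show ?thesis by (simp add: continuous_on_eq_continuous_at)
  qed
  then show ?thesis by (simp add: continuous_at_imp_continuous_on)
qed

lemma circ_cont: assumes "good u" shows "continuous_on circle (circ u)"
proof -
  have cF: "isCont (liftF u) t" for t using liftF_cont[OF assms] by (simp add: continuous_on_eq_continuous_at)
  have "continuous (at z0 within circle) (circ u)" if z0: "z0 \<in> circle" for z0
  proof -
    define t0 where "t0 = Arg2pi z0 / (2 * pi)"
    have z0t: "cis (2 * pi * t0) = z0" using circle_cis[OF z0] by (simp add: t0_def)
    have nz0: "z0 \<noteq> 0" using z0 by (auto simp: circle_def)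
    define q where "q z = t0 + Arg (z / z0) / (2 * pi)" for z
    have qz: "cis (2 * pi * q z) = z" if "z \<in> circle" for z
    proof -
      have nz: "z / z0 \<noteq> 0" using that nz0 by (auto simp: circle_def)
      have "cis (Arg (z / z0)) = z / z0"
        using cis_Arg[OF nz] that z0 by (simp add: circle_def sgn_div_norm norm_divide)
      moreover have "2 * pi * q z = 2 * pi * t0 + Arg (z / z0)" by (simp add: q_def field_simps)
      ultimately show ?thesis using z0t nz0 by (simp flip: cis_mult)
    qed
    have cq: "continuous (at z0) q"
    proof -
      have "continuous (at z0) (\<lambda>z. z / z0)" by (intro continuous_intros) (use nz0 in auto)
      moreover have "continuous (at (z0 / z0)) Arg" by (rule continuous_at_Arg) (use nz0 in simp)
      ultimately have "continuous (at z0) (\<lambda>z. Arg (z / z0))"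
        using continuous_at_compose[of z0 "\<lambda>z. z / z0" Arg] by (simp add: o_def)
      then show ?thesis unfolding q_def by (intro continuous_intros) auto
    qed
    have "continuous (at z0) (\<lambda>z. liftF u (q z))"
      using continuous_at_compose[OF cq cF[of "q z0"]] by (simp add: o_def)
    then have "continuous (at z0) (\<lambda>z. exp (\<i> * of_real (2 * pi * liftF u (q z))))"
      by (intro continuous_intros)
    then have "continuous (at z0 within circle) (\<lambda>z. exp (\<i> * of_real (2 * pi * liftF u (q z))))"
      by (rule continuous_at_imp_continuous_within)
    then have c1: "continuous (at z0 within circle) (\<lambda>z. cis (2 * pi * liftF u (q z)))"
      unfolding cis_conv_exp .
    show ?thesis
    proof (rule continuous_transform_within[OF c1 zero_less_one z0])
      fix z assume "z \<in> circle" "dist z z0 < 1"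
      then show "cis (2 * pi * liftF u (q z)) = circ u z"
        using qz[of z] circ_cis[of u "q z"] by simp
    qed
  qed
  then show ?thesis using continuous_on_eq_continuous_within by blast
qed

lemma circ_member:
  assumes "good u" "good u'" "u \<circ> u' = id" "u' \<circ> u = id"
  shows "circ u \<in> carrier Homeo_plus_S1"
proof -
  have m1: "maps01 u" "maps01 u'" using good_maps01 assms by auto
  have c1: "circ u \<circ> circ u' = id" using circ_comp[OF m1(2), of u] assms(3) circ_id by simp
  have c2: "circ u' \<circ> circ u = id" using circ_comp[OF m1(1), of u'] assms(4) circ_id by simp
  have into: "circ h z \<in> circle" if "z \<in> circle" for h z using that by (simp add: circ_def)
  have im: "circ h ` circle = circle" if "circ h \<circ> circ h' = id" for h h'
  proof
    show "circ h ` circle \<subseteq> circle" using into by auto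
    show "circle \<subseteq> circ h ` circle"
    proof
      fix y assume y: "y \<in> circle"
      then have "circ h' y \<in> circle" "circ h (circ h' y) = y" using into that by (auto simp: pointfree_idE)
      then show "y \<in> circ h ` circle" by (metis image_eqI)
    qed
  qed
  have "homeomorphism circle circle (circ u) (circ u')"
    unfolding homeomorphism_def using im[OF c1] im[OF c2] c1 c2 circ_cont[OF assms(1)] circ_cont[OF assms(2)]
    by (auto simp: pointfree_idE)
  moreover have "continuous_on UNIV (liftF u) \<and> strict_mono (liftF u) \<and> (\<forall>t. liftF u (t + 1) = liftF u t + 1)
      \<and> (\<forall>t. circ u (cis (2 * pi * t)) = cis (2 * pi * liftF u t))"
    using liftF_cont[OF assms(1)] liftF_mono[OF assms(1)] liftF_shift circ_cis by blast
  moreover have "\<forall>z. z \<notin> circle \<longrightarrow> circ u z = z" by (simp add: circ_def)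
  ultimately show ?thesis unfolding Homeo_plus_S1_def by auto
qed

lemma maps01_conjI: "maps01 (conjI h)"
  unfolding maps01_def
proof (intro allI impI)
  fix t :: real assume t: "0 \<le> t \<and> t < 1"
  show "0 \<le> conjI h t \<and> conjI h t < 1"
  proof (cases "t = 0")
    case True then show ?thesis by (simp add: conjI_def)
  next
    case False then show ?thesis using t conjI_in[of t h] by auto
  qed
qed

lemma good_conjI: assumes "strict_mono f" "f \<circ> f' = id" shows "good (conjI f)"
  unfolding good_def using conjI_mono[OF assms(1)] conjI_cont[OF assms] by (simp add: conjI_def)

lemma rho_circ: "rho (\<lambda>l. circ (conjI (g l))) w = circ (conjI (rho g w))"
proof (induction w)
  case Nil show ?case by (simp only: rho_Nil conjI_id circ_id)
next
  case (Cons x w)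
  have "rho (\<lambda>l. circ (conjI (g l))) (x # w) = circ (conjI (g x)) \<circ> circ (conjI (rho g w))"
    by (simp only: rho_Cons Cons.IH)
  also have "\<dots> = circ (conjI (g x) \<circ> conjI (rho g w))" by (rule circ_comp[symmetric, OF maps01_conjI])
  also have "\<dots> = circ (conjI (rho g (x # w)))" by (simp only: rho_Cons conjI_comp)
  finally show ?case .
qed

lemma conjI_id_on: assumes "\<forall>t. 0 \<le> t \<and> t < 1 \<longrightarrow> conjI h t = t" shows "conjI h = id"
proof
  fix t show "conjI h t = id t"
  proof (cases "0 < t \<and> t < 1")
    case True then show ?thesis using assms by auto
  next
    case False then show ?thesis unfolding conjI_def by auto
  qed
qed

theorem homeoS1_part:
  assumes m: "1 \<le> m" and mn: "m < n"
  shows "contains_copy_of Homeo_plus_S1 (BS m n)"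
proof -
  obtain fa fa' where F: "\<forall>l. gR fa fa' l \<in> DiffS" "\<forall>l. gR fa fa' l \<circ> gR fa fa' (bs_inv_letter l) = id"
     "rho (gR fa fa') (bs_relator m n) = id" "\<forall>w. rho (gR fa fa') w = id \<longrightarrow> bs_equiv m n w []"
    using faithful_rep_R[OF m mn] by blast
  define g where "g = gR fa fa'"
  show ?thesis
  proof (rule embed[where g = "\<lambda>l. circ (conjI (g l))"])
    show "\<And>f h. mult Homeo_plus_S1 f h = f \<circ> h" by (simp add: Homeo_plus_S1_def)
    show "one Homeo_plus_S1 = id" by (simp add: Homeo_plus_S1_def)
    show "rho (\<lambda>l. circ (conjI (g l))) w \<in> carrier Homeo_plus_S1" for w
    proof -
      have f: "rho g w \<in> DiffS" using rho_DS F(1) g_def by blast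
      note I = DiffS_inv[OF f]
      have "good (conjI (rho g w))" by (rule good_conjI[OF I(1) I(2)])
      moreover have "good (conjI (Hilbert_Choice.inv (rho g w)))" by (rule good_conjI[OF I(4) I(3)])
      moreover have "conjI (rho g w) \<circ> conjI (Hilbert_Choice.inv (rho g w)) = id"
        by (simp only: conjI_comp[symmetric] I(2) conjI_id)
      moreover have "conjI (Hilbert_Choice.inv (rho g w)) \<circ> conjI (rho g w) = id"
        by (simp only: conjI_comp[symmetric] I(3) conjI_id)
      ultimately show ?thesis unfolding rho_circ by (rule circ_member)
    qed
    show "circ (conjI (g l)) \<circ> circ (conjI (g (bs_inv_letter l))) = id" for l
    proof -
      have "g l \<circ> g (bs_inv_letter l) = id" using F(2) g_def by blast
      then show ?thesis by (simp only: circ_comp[symmetric, OF maps01_conjI] conjI_comp[symmetric] conjI_id circ_id)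
    qed
    show "rho (\<lambda>l. circ (conjI (g l))) (bs_relator m n) = id"
      unfolding rho_circ using F(3) by (simp only: g_def conjI_id circ_id)
    show "bs_equiv m n w []" if "rho (\<lambda>l. circ (conjI (g l))) w = id" for w
    proof -
      have "circ (conjI (rho g w)) = id" using that unfolding rho_circ .
      then have "\<forall>t. 0 \<le> t \<and> t < 1 \<longrightarrow> conjI (rho g w) t = t"
        using circ_faith maps01_conjI by blast
      then have "conjI (rho g w) = id" by (rule conjI_id_on)
      then have "rho g w = id" by (rule conjI_faith)
      then show ?thesis using F(4) g_def by blast
    qed
  qed
qed

theorem theorem1p5:
  fixes m n :: nat
  assumes "1 \<le> m" and "m < n"
  shows "contains_copy_of Diff_omega_plus_R (BS m n)
       \<and> contains_copy_of Homeo_plus_S1 (BS m n)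
       \<and> contains_copy_of Homeo_plus_I (BS m n)"
  using diff_part[OF assms] homeoS1_part[OF assms] homeoI_part[OF assms] by blast

end
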